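(* Assume that every $P_x$ and $Q_y$ is the distribution of a vector of i.i.d. centered (mean-zero) standard type I extreme value (Gumbel) random variables. Then the generalized entropy of matching is $$\mathcal E(\mu,\bm r)=-\sum_{x\in\mathcal X,y\in\mathcal Y_0}\mu_{xy}\log\mu_{y|x}-\sum_{y\in\mathcal Y,x\in\mathcal X_0}\mu_{xy}\log\mu_{x|y},$$ where $\mu_{y|x}=\mu_{xy}/n_x$, $\mu_{x|y}=\mu_{xy}/m_y$. Moreover, define for $\bm u\in\mathbb R^{\mathcal X},\bm v\in\mathbb R^{\mathcal Y}$ $$F(\bm u,\bm v;\Phi,\bm r)=\sum_{x\in\mathcal X}n_x(u_x+e^{-u_x}-1)+\sum_{y\in\mathcal Y}m_y(v_y+e^{-v_y}-1)+2\sum_{x\in\mathcal X,y\in\mathcal Y}\sqrt{n_xm_y}\,e^{(\Phi_{xy}-u_x-v_y)/2}.$$ Then $F$ is strictly convex in $(\bm u,\bm v)$, its minimum value equals the social welfare $\mathcal W(\Phi,\bm r)$, and at the minimizer the equilibrium matching patterns are $\mu_{x0}=n_xe^{-u_x}$, $\mu_{0y}=m_ye^{-v_y}$, $\mu_{xy}=\sqrt{n_xm_y}\exp((\Phi_{xy}-u_x-v_y)/2)$; in particular $\mu_{xy}=\sqrt{\mu_{x0}\mu_{0y}}\exp(\Phi_{xy}/2)$, and the minimizers $u_x=-\log(\mu_{x0}/n_x)$, $v_y=-\log(\mu_{0y}/m_y)$ are the average equilibrium utilities of men of group $x$ and women of group $y$.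
   Context: Setting. $\mathcal X,\mathcal Y$ finite sets of groups of men and women, $\mathcal X_0=\mathcal X\cup\{0\}$, $\mathcal Y_0=\mathcal Y\cup\{0\}$ ($0$ = singlehood), continuum populations with masses $n_x>0$, $m_y>0$, $\bm r=(\bm n,\bm m)$. Each man of group $x$ has a vector $\varepsilon\in\mathbb R^{\mathcal Y_0}$ distributed as $P_x$, each woman of group $y$ a vector $\eta\in\mathbb R^{\mathcal X_0}$ distributed as $Q_y$. Separability with transferable utility: for a surplus matrix $\Phi=(\Phi_{xy})$, the joint surplus of a match between man $i$ (group $x$) and woman $j$ (group $y$) is $\Phi_{xy}+\varepsilon_{iy}+\eta_{xj}$, and singles get $\varepsilon_{i0}$, $\eta_{0j}$. A group-level matching $\mu=(\mu_{xy})$ records masses of couples, with $\mu_{x0}=n_x-\sum_y\mu_{xy}$, $\mu_{0y}=m_y-\sum_x\mu_{xy}$. $G(\bm U,\bm n)=\sum_x n_x\mathbb E_{P_x}\max_{y\in\mathcal Y_0}(U_{xy}+\varepsilon_y)$ (with $U_{x0}=0$), $H(\bm V,\bm m)=\sum_ym_y\mathbb E_{Q_y}\max_{x\in\mathcal X_0}(V_{xy}+\eta_x)$ (with $V_{0y}=0$), $G^*,H^*$ their Legendre–Fenchel transforms in $\bm U,\bm V$, and the generalized entropy is $\mathcal E(\mu,\bm r)=-G^*(\mu,\bm n)-H^*(\mu,\bm m)$. The social welfare $\mathcal W(\Phi,\bm r)$ is the total utility of all agents at a stable outcome, equal to $\max_{\mu}\left(\sum_{x,y}\mu_{xy}\Phi_{xy}+\mathcal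 E(\mu,\bm r)\right)$, and the equilibrium matching patterns are the maximizer. *)

theory Defs
  imports "HOL-Analysis.Analysis"
begin

text \<open>Groups of men: finite type 'x; groups of women: finite type 'y.
  Singlehood 0 is represented by None, so X0 = 'x option, Y0 = 'y option.\<close>

definition mu_x0 :: "('x::finite \<Rightarrow> 'y::finite \<Rightarrow> real) \<Rightarrow> ('x \<Rightarrow> real) \<Rightarrow> 'x \<Rightarrow> real" where
  "mu_x0 mu n x = n x - (\<Sum>y\<in>UNIV. mu x y)"

definition mu_0y :: "('x::finite \<Rightarrow> 'y::finite \<Rightarrow> real) \<Rightarrow> ('y \<Rightarrow> real) \<Rightarrow> 'y \<Rightarrow> real" where
  "mu_0y mu m y = m y - (\<Sum>x\<in>UNIV. mu x y)"

text \<open>Centered standard type I extreme value (Gumbel) distribution on the reals: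
  CDF exp(-exp(-(t+gamma))), gamma the Euler-Mascheroni constant (so the mean is 0).\<close>

definition gumbel_density :: "real \<Rightarrow> real" where
  "gumbel_density t = exp (-(t + euler_mascheroni)) * exp (- exp (-(t + euler_mascheroni)))"

definition centered_gumbel :: "real measure" where
  "centered_gumbel = density lborel (\<lambda>t. ennreal (gumbel_density t))"

definition iid_gumbel :: "('i::finite \<Rightarrow> real) measure" where
  "iid_gumbel = PiM UNIV (\<lambda>_. centered_gumbel)"

definition Uext :: "('x \<Rightarrow> 'y \<Rightarrow> real) \<Rightarrow> 'x \<Rightarrow> 'y option \<Rightarrow> real" where
  "Uext U x z = (case z of None \<Rightarrow> 0 | Some y \<Rightarrow> U x y)"

definition Vext :: "('x \<Rightarrow> 'y \<Rightarrow> real) \<Rightarrow> 'y \<Rightarrow> 'x option \<Rightarrow> real" where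
  "Vext V y z = (case z of None \<Rightarrow> 0 | Some x \<Rightarrow> V x y)"

definition avg_util_men :: "('x \<Rightarrow> ('y::finite option \<Rightarrow> real) measure) \<Rightarrow> ('x \<Rightarrow> 'y \<Rightarrow> real) \<Rightarrow> 'x \<Rightarrow> real" where
  "avg_util_men P U x = (\<integral>eps. Max (range (\<lambda>z. Uext U x z + eps z)) \<partial>(P x))"

definition avg_util_women :: "('y \<Rightarrow> ('x::finite option \<Rightarrow> real) measure) \<Rightarrow> ('x \<Rightarrow> 'y \<Rightarrow> real) \<Rightarrow> 'y \<Rightarrow> real" where
  "avg_util_women Q V y = (\<integral>eta. Max (range (\<lambda>z. Vext V y z + eta z)) \<partial>(Q y))"

definition G :: "('x::finite \<Rightarrow> ('y::finite option \<Rightarrow> real) measure) \<Rightarrow> ('x \<Rightarrow> 'y \<Rightarrow> real) \<Rightarrow> ('x \<Rightarrow> real) \<Rightarrow> real" where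
  "G P U n = (\<Sum>x\<in>UNIV. n x * avg_util_men P U x)"

definition H :: "('y::finite \<Rightarrow> ('x::finite option \<Rightarrow> real) measure) \<Rightarrow> ('x \<Rightarrow> 'y \<Rightarrow> real) \<Rightarrow> ('y \<Rightarrow> real) \<Rightarrow> real" where
  "H Q V m = (\<Sum>y\<in>UNIV. m y * avg_util_women Q V y)"

definition Gstar :: "('x::finite \<Rightarrow> ('y::finite option \<Rightarrow> real) measure) \<Rightarrow> ('x \<Rightarrow> 'y \<Rightarrow> real) \<Rightarrow> ('x \<Rightarrow> real) \<Rightarrow> ereal" where
  "Gstar P mu n = (SUP U. ereal ((\<Sum>x\<in>UNIV. \<Sum>y\<in>UNIV. mu x y * U x y) - G P U n))"

definition Hstar :: "('y::finite \<Rightarrow> ('x::finite option \<Rightarrow> real) measure) \<Rightarrow> ('x \<Rightarrow> 'y \<Rightarrow> real) \<Rightarrow> ('y \<Rightarrow> real) \<Rightarrow> ereal" where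
  "Hstar Q mu m = (SUP V. ereal ((\<Sum>x\<in>UNIV. \<Sum>y\<in>UNIV. mu x y * V x y) - H Q V m))"

definition gen_entropy where
  "gen_entropy P Q mu n m = - Gstar P mu n - Hstar Q mu m"

definition welfare_obj where
  "welfare_obj P Q Phi mu n m = ereal (\<Sum>x\<in>UNIV. \<Sum>y\<in>UNIV. mu x y * Phi x y) + gen_entropy P Q mu n m"

definition social_welfare where
  "social_welfare P Q Phi n m = (SUP mu. welfare_obj P Q Phi mu n m)"

definition is_equilibrium_matching where
  "is_equilibrium_matching P Q Phi n m mu \<longleftrightarrow> welfare_obj P Q Phi mu n m = social_welfare P Q Phi n m"

definition feasible_matching :: "('x::finite \<Rightarrow> 'y::finite \<Rightarrow> real) \<Rightarrow> ('x \<Rightarrow> real) \<Rightarrow> ('y \<Rightarrow> real) \<Rightarrow> bool" where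
  "feasible_matching mu n m \<longleftrightarrow> (\<forall>x y. 0 \<le> mu x y) \<and> (\<forall>x. 0 \<le> mu_x0 mu n x) \<and> (\<forall>y. 0 \<le> mu_0y mu m y)"

definition Ffun :: "('x::finite \<Rightarrow> 'y::finite \<Rightarrow> real) \<Rightarrow> ('x \<Rightarrow> real) \<Rightarrow> ('y \<Rightarrow> real) \<Rightarrow> ('x \<Rightarrow> real) \<Rightarrow> ('y \<Rightarrow> real) \<Rightarrow> real" where
  "Ffun Phi n m u v =
     (\<Sum>x\<in>UNIV. n x * (u x + exp (- u x) - 1))
   + (\<Sum>y\<in>UNIV. m y * (v y + exp (- v y) - 1))
   + 2 * (\<Sum>x\<in>UNIV. \<Sum>y\<in>UNIV. sqrt (n x * m y) * exp ((Phi x y - u x - v y) / 2))"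

end

theory Submission
  imports Defs "HOL-Probability.Probability" "HOL-Real_Asymp.Real_Asymp"
begin

lemma gamma_bochner:
  fixes x :: real assumes x: "0 < x"
  shows "has_bochner_integral lborel (\<lambda>t. indicator {0..} t * (t powr (x-1) / exp t)) (Gamma x)"
proof -
  have I: "((\<lambda>t. t powr (x-1) / exp t) has_integral Gamma x) {0..}"
    using Gamma_integral_real[OF x] .
  have N: "integral\<^sup>N lborel (\<lambda>t. ennreal (t powr (x-1) / exp t) * indicator {0..} t) = ennreal (Gamma x)"
    by (rule nn_integral_has_integral_lebesgue'[OF _ I]) simp
  show ?thesis
  proof (rule has_bochner_integral_nn_integral)
    show "0 \<le> Gamma x" using Gamma_real_pos[OF x] by simp
    show "(\<integral>\<^sup>+ t. ennreal (indicator {0..} t * (t powr (x - 1) / exp t)) \<partial>lborel) = ennreal (Gamma x)"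
      using N by (subst (asm) nn_integral_cong[where v="\<lambda>t. ennreal (indicator {0..} t * (t powr (x - 1) / exp t))"])
         (auto split: split_indicator)
  qed auto
qed

lemma diffquot_seq:
  fixes f :: "real \<Rightarrow> real"
  assumes D: "(f has_field_derivative D) (at x)"
  shows "(\<lambda>k. (f (x + inverse (real (Suc k))) - f x) / inverse (real (Suc k))) \<longlonglongrightarrow> D"
proof -
  have lim: "((\<lambda>y. (f y - f x) / (y - x)) \<longlongrightarrow> D) (at x)"
    using D by (simp add: has_field_derivative_iff)
  have s: "filterlim (\<lambda>k. x + inverse (real (Suc k))) (at x) sequentially"
  proof (rule filterlim_atI)
    show "((\<lambda>k. x + inverse (real (Suc k))) \<longlongrightarrow> x) sequentially"
      using tendsto_add[OF tendsto_const LIMSEQ_inverse_real_of_nat, of x] by simp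
  qed simp
  show ?thesis using filterlim_compose[OF lim s] by simp
qed

lemma quot_mono:
  fixes t a b :: real
  assumes t: "0 < t" and b: "0 < b" and ab: "b \<le> a"
  shows "(t powr b - 1) / b \<le> (t powr a - 1) / a"
proof -
  define r where "r = b / a"
  have r: "0 < r" "r \<le> 1" using b ab by (auto simp: r_def)
  have "exp ((1 - r) *\<^sub>R 0 + r *\<^sub>R (a * ln t)) \<le> (1 - r) * exp 0 + r * exp (a * ln t)"
    using r by (intro convex_onD[OF exp_convex]) auto
  then have "t powr b \<le> r * t powr a + (1 - r)"
    using t b ab by (simp add: powr_def r_def)
  then have "t powr b - 1 \<le> r * (t powr a - 1)" by (simp add: algebra_simps)
  then show ?thesis using b ab by (simp add: r_def field_simps)
qed

lemma ln_exp_integral: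
  "has_bochner_integral lborel (\<lambda>t::real. indicator {0..} t * (- ln t / exp t)) euler_mascheroni"
proof -
  define h where "h k = inverse (real (Suc k))" for k
  have hpos: "0 < h k" for k by (simp add: h_def)
  define f where "f k t = indicator {0..} t * ((t powr 0 - t powr h k) / h k / exp t)" for k t
  have fint: "has_bochner_integral lborel (f k) ((Gamma 1 - Gamma (1 + h k)) / h k)" for k
  proof -
    have "has_bochner_integral lborel (\<lambda>t. (indicator {0..} t * (t powr (1-1) / exp t)
        - indicator {0..} t * (t powr ((1 + h k)-1) / exp t)) / h k) ((Gamma 1 - Gamma (1 + h k)) / h k)"
      by (intro has_bochner_integral_divide_zero has_bochner_integral_diff gamma_bochner)
         (use hpos[of k] in auto)
    moreover have "(\<lambda>t. (indicator {0..} t * (t powr (1-1) / exp t)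
        - indicator {0..} t * (t powr ((1 + h k)-1) / exp t)) / h k) = f k"
      by (auto simp: f_def fun_eq_iff split: split_indicator simp: field_simps)
    ultimately show ?thesis by simp
  qed
  have mono: "mono (\<lambda>k. f k t)" for t
  proof (rule incseq_SucI)
    fix k
    show "f k t \<le> f (Suc k) t"
    proof (cases "0 < t")
      case True
      have "h (Suc k) \<le> h k" by (simp add: h_def field_simps)
      from quot_mono[OF True hpos this]
      have "(t powr h (Suc k) - 1) / h (Suc k) \<le> (t powr h k - 1) / h k" .
      then have "(1 - t powr h k) / h k \<le> (1 - t powr h (Suc k)) / h (Suc k)"
        by (simp add: diff_divide_distrib)
      then have "(1 - t powr h k) / h k / exp t \<le> (1 - t powr h (Suc k)) / h (Suc k) / exp t"
        by (rule divide_right_mono) simp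
      then show ?thesis using True by (simp add: f_def)
    next
      case False
      then show ?thesis by (auto simp: f_def split: split_indicator)
    qed
  qed
  have lim: "(\<lambda>k. f k t) \<longlonglongrightarrow> indicator {0..} t * (- ln t / exp t)" for t
  proof (cases "0 < t")
    case True
    have D: "((\<lambda>y. exp (y * ln t)) has_field_derivative ln t) (at 0)"
      by (auto intro!: derivative_eq_intros)
    from diffquot_seq[OF D]
    have "(\<lambda>k. (t powr h k - 1) / h k) \<longlonglongrightarrow> ln t"
      using True by (simp add: h_def powr_def)
    then have "(\<lambda>k. indicator {0..} t * (- ((t powr h k - 1) / h k) / exp t)) \<longlonglongrightarrow> indicator {0..} t * (- ln t / exp t)"
      by (intro tendsto_intros) auto
    moreover have "(\<lambda>k. indicator {0..} t * (- ((t powr h k - 1) / h k) / exp t)) = (\<lambda>k. f k t)"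
      using True by (auto simp: f_def fun_eq_iff minus_divide_left)
    ultimately show ?thesis by simp
  next
    case False
    then have "f k t = 0" for k by (auto simp: f_def split: split_indicator)
    moreover have "indicator {0..} t * (- ln t / exp t) = 0" using False by (auto split: split_indicator)
    ultimately show ?thesis by (simp only:) (rule tendsto_const)
  qed
  have ilim: "(\<lambda>k. (Gamma 1 - Gamma (1 + h k)) / h k) \<longlonglongrightarrow> euler_mascheroni"
  proof -
    have D: "(Gamma has_field_derivative - euler_mascheroni) (at (1::real))"
      using has_field_derivative_Gamma[of "1::real" UNIV] by simp
    from tendsto_minus[OF diffquot_seq[OF D]] show ?thesis
      by (simp add: h_def minus_divide_left)
  qed
  have ilim': "(\<lambda>k. integral\<^sup>L lborel (f k)) \<longlonglongrightarrow> euler_mascheroni"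
    using ilim fint by (simp add: has_bochner_integral_iff)
  have fi: "\<And>i. integrable lborel (f i)" using fint by (simp add: has_bochner_integral_iff)
  have mono': "AE t in lborel. incseq (\<lambda>k. f k t)" using mono by simp
  have lim': "AE t in lborel. (\<lambda>k. f k t) \<longlonglongrightarrow> indicator {0..} t * (- ln t / exp t)"
    using lim by simp
  have meas: "(\<lambda>t::real. indicator {0..} t * (- ln t / exp t)) \<in> borel_measurable lborel"
    by (auto intro!: borel_measurable_times borel_measurable_indicator)
  show ?thesis
    using has_bochner_integral_monotone_convergence[OF fi mono' lim' ilim' meas] .
qed

definition F0 :: "real \<Rightarrow> real" where "F0 x = exp (- exp (- (x + euler_mascheroni)))"

lemma gumbel_density_nonneg: "0 \<le> gumbel_density t"
  by (simp add: gumbel_density_def)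

lemma gumbel_density_meas[measurable]: "gumbel_density \<in> borel_measurable borel"
  unfolding gumbel_density_def[abs_def] by measurable

lemma gumbel_cdf_nn: "(\<integral>\<^sup>+t. ennreal (gumbel_density t) * indicator {..x} t \<partial>lborel) = ennreal (F0 x)"
proof -
  have "(\<integral>\<^sup>+t. ennreal (gumbel_density t) * indicator {..x} t \<partial>lborel)
      = (\<integral>\<^sup>+s. ennreal (gumbel_density (- s)) * indicator {-x..} s \<partial>lborel)"
    by (subst nn_integral_real_affine[where c="-1" and t=0]) (auto intro!: nn_integral_cong split: split_indicator)
  also have "\<dots> = ennreal (0 - (- exp (- exp ((-x) - euler_mascheroni))))"
  proof (rule nn_integral_FTC_atLeast)
    show "(\<lambda>s. gumbel_density (- s)) \<in> borel_measurable borel" by measurable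
    fix s :: real
    show "((\<lambda>s. - exp (- exp (s - euler_mascheroni))) has_real_derivative gumbel_density (- s)) (at s)"
      by (auto intro!: derivative_eq_intros simp: gumbel_density_def)
    show "0 \<le> gumbel_density (- s)" by (rule gumbel_density_nonneg)
  next
    show "((\<lambda>s::real. - exp (- exp (s - euler_mascheroni))) \<longlongrightarrow> 0) at_top"
      by real_asymp
  qed
  also have "\<dots> = ennreal (F0 x)" by (simp add: F0_def)
  finally show ?thesis .
qed

lemma gumbel_emeasure_atMost: "emeasure centered_gumbel {..x} = ennreal (F0 x)"
  unfolding centered_gumbel_def
  by (subst emeasure_density) (auto simp: gumbel_cdf_nn)

lemma sets_centered_gumbel[simp, measurable_cong]: "sets centered_gumbel = sets borel"
  by (simp add: centered_gumbel_def)

lemma space_centered_gumbel[simp]: "space centered_gumbel = UNIV"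
  by (simp add: centered_gumbel_def)

lemma prob_space_gumbel: "prob_space centered_gumbel"
proof
  have "emeasure centered_gumbel UNIV = (\<integral>\<^sup>+t. ennreal (gumbel_density t) \<partial>lborel)"
    unfolding centered_gumbel_def by (subst emeasure_density) auto
  also have "\<dots> = (\<integral>\<^sup>+t. ennreal (gumbel_density t) * indicator {..0} t + ennreal (gumbel_density t) * indicator {0..} t \<partial>lborel)"
    by (intro nn_integral_cong_AE) (use AE_lborel_singleton[of 0] in \<open>auto split: split_indicator\<close>)
  also have "\<dots> = (\<integral>\<^sup>+t. ennreal (gumbel_density t) * indicator {..0} t \<partial>lborel) + (\<integral>\<^sup>+t. ennreal (gumbel_density t) * indicator {0..} t \<partial>lborel)"
    by (rule nn_integral_add) auto
  also have "(\<integral>\<^sup>+t. ennreal (gumbel_density t) * indicator {0..} t \<partial>lborel) = ennreal (1 - F0 0)"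
  proof (rule nn_integral_FTC_atLeast)
    fix s :: real
    show "(F0 has_real_derivative gumbel_density s) (at s)"
      unfolding F0_def[abs_def] by (auto intro!: derivative_eq_intros simp: gumbel_density_def)
    show "0 \<le> gumbel_density s" by (rule gumbel_density_nonneg)
  next
    show "(F0 \<longlongrightarrow> 1) at_top" unfolding F0_def[abs_def] by real_asymp
  qed auto
  also have "(\<integral>\<^sup>+t. ennreal (gumbel_density t) * indicator {..0} t \<partial>lborel) = ennreal (F0 0)"
    by (rule gumbel_cdf_nn)
  also have "ennreal (F0 0) + ennreal (1 - F0 0) = 1"
  proof -
    have "F0 0 \<le> 1" by (simp add: F0_def)
    moreover have "0 \<le> F0 0" by (simp add: F0_def)
    ultimately show ?thesis by (subst ennreal_plus[symmetric]) auto
  qed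
  finally show "emeasure centered_gumbel (space centered_gumbel) = 1"
    by simp
qed

lemma real_distribution_gumbel: "real_distribution centered_gumbel"
  unfolding real_distribution_def real_distribution_axioms_def
  using prob_space_gumbel by simp

definition Eexp :: "real measure" where "Eexp = density lborel (exponential_density 1)"
definition phi :: "real \<Rightarrow> real" where "phi w = - ln w - euler_mascheroni"

lemma phi_meas[measurable]: "phi \<in> borel_measurable borel"
  unfolding phi_def[abs_def] by measurable

lemma sets_Eexp[simp, measurable_cong]: "sets Eexp = sets borel" by (simp add: Eexp_def)
lemma space_Eexp[simp]: "space Eexp = UNIV" by (simp add: Eexp_def)

lemma prob_space_Eexp: "prob_space Eexp"
  unfolding Eexp_def by (rule prob_space_exponential_density) simp

lemma Eexp_tail:
  shows "emeasure Eexp {w. phi w \<le> x} = ennreal (F0 x)"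
proof -
  define c where "c = exp (- (x + euler_mascheroni))"
  have cpos: "0 < c" by (simp add: c_def)
  have "emeasure Eexp {w. phi w \<le> x} = (\<integral>\<^sup>+w. ennreal (exponential_density 1 w) * indicator {w. phi w \<le> x} w \<partial>lborel)"
    unfolding Eexp_def by (subst emeasure_density) auto
  also have "\<dots> = (\<integral>\<^sup>+w. ennreal (exp (- w)) * indicator {c..} w \<partial>lborel)"
  proof (intro nn_integral_cong_AE)
    show "AE w in lborel. ennreal (exponential_density 1 w) * indicator {w. phi w \<le> x} w
        = ennreal (exp (- w)) * indicator {c..} w"
      using AE_lborel_singleton[of 0]
    proof eventually_elim
      fix w :: real assume w: "w \<noteq> 0"
      show "ennreal (exponential_density 1 w) * indicator {w. phi w \<le> x} w
        = ennreal (exp (- w)) * indicator {c..} w"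
      proof (cases "w < 0")
        case True then show ?thesis using cpos by (auto simp: exponential_density_def split: split_indicator)
      next
        case False
        then have wpos: "0 < w" using w by simp
        have "phi w \<le> x \<longleftrightarrow> c \<le> w"
        proof -
          have "phi w \<le> x \<longleftrightarrow> - (x + euler_mascheroni) \<le> ln w" by (auto simp: phi_def)
          also have "\<dots> \<longleftrightarrow> c \<le> w" unfolding c_def using wpos
            by (metis exp_le_cancel_iff exp_ln)
          finally show ?thesis .
        qed
        then show ?thesis using False by (auto simp: exponential_density_def split: split_indicator)
      qed
    qed
  qed
  also have "\<dots> = ennreal (0 - (- exp (- c)))"
  proof (rule nn_integral_FTC_atLeast)
    fix s :: real
    show "((\<lambda>s. - exp (- s)) has_real_derivative exp (- s)) (at s)"
      by (auto intro!: derivative_eq_intros)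
  next
    show "((\<lambda>s::real. - exp (- s)) \<longlongrightarrow> 0) at_top" by real_asymp
  qed auto
  also have "\<dots> = ennreal (F0 x)" by (simp add: F0_def c_def)
  finally show ?thesis .
qed

lemma gumbel_eq_distr: "centered_gumbel = distr Eexp borel phi"
proof (rule cdf_unique)
  show "real_distribution centered_gumbel" by (rule real_distribution_gumbel)
  show "real_distribution (distr Eexp borel phi)"
    unfolding real_distribution_def real_distribution_axioms_def
    using prob_space.prob_space_distr[OF prob_space_Eexp, of phi borel] by simp
  show "cdf centered_gumbel = cdf (distr Eexp borel phi)"
  proof
    fix x
    have "emeasure (distr Eexp borel phi) {..x} = emeasure Eexp {w. phi w \<le> x}"
      by (subst emeasure_distr) (auto simp: vimage_def)
    then have "emeasure (distr Eexp borel phi) {..x} = emeasure centered_gumbel {..x}"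
      by (simp add: Eexp_tail gumbel_emeasure_atMost)
    then show "cdf centered_gumbel x = cdf (distr Eexp borel phi) x"
      by (simp add: cdf_def measure_def)
  qed
qed

lemma gumbel_mean: "has_bochner_integral centered_gumbel (\<lambda>t. t) 0"
proof -
  have A: "has_bochner_integral lborel (\<lambda>w. exponential_density 1 w * phi w)
       (euler_mascheroni - euler_mascheroni * Gamma 1)"
  proof -
    have "has_bochner_integral lborel (\<lambda>w::real. indicator {0..} w * (- ln w / exp w)
        - euler_mascheroni * (indicator {0..} w * (w powr (1 - 1) / exp w))) (euler_mascheroni - euler_mascheroni * Gamma 1)"
      by (intro has_bochner_integral_diff has_bochner_integral_mult_right ln_exp_integral gamma_bochner) simp
    then show ?thesis
    proof (rule has_bochner_integral_cong_AE[THEN iffD1, rotated 3])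
      show "AE w in lborel. indicator {0..} w * (- ln w / exp w)
        - euler_mascheroni * (indicator {0..} w * (w powr (1 - 1) / exp w)) = exponential_density 1 w * phi w"
        using AE_lborel_singleton[of 0]
        by eventually_elim (auto simp: exponential_density_def phi_def exp_minus field_simps split: split_indicator)
    qed auto
  qed
  have dens: "(\<lambda>w. exponential_density 1 w) \<in> borel_measurable lborel" by simp
  have nn: "AE w in lborel. 0 \<le> exponential_density 1 w" by (simp add: exponential_density_nonneg)
  have "integrable Eexp phi"
    unfolding Eexp_def using A by (subst integrable_density[OF _ dens nn]) (auto simp: has_bochner_integral_iff)
  moreover have "integral\<^sup>L Eexp phi = 0"
    unfolding Eexp_def using A by (subst integral_density[OF _ dens nn]) (auto simp: has_bochner_integral_iff)
  ultimately have "has_bochner_integral Eexp phi 0" by (simp add: has_bochner_integral_iff)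
  then show ?thesis
    unfolding gumbel_eq_distr
    by (simp add: has_bochner_integral_iff integrable_distr_eq integral_distr)
qed

lemma F0_shift_prod:
  fixes a :: "'i::finite \<Rightarrow> real"
  shows "(\<Prod>z\<in>UNIV. F0 (t - a z)) = F0 (t - ln (\<Sum>z\<in>UNIV. exp (a z)))"
proof -
  have S: "0 < (\<Sum>z\<in>UNIV. exp (a z))"
    by (rule sum_pos) auto
  have "(\<Prod>z\<in>UNIV. F0 (t - a z)) = exp (\<Sum>z\<in>UNIV. - exp (- (t - a z + euler_mascheroni)))"
    by (simp add: F0_def exp_sum)
  also have "(\<Sum>z\<in>UNIV. - exp (- (t - a z + euler_mascheroni))) = - (exp (- (t + euler_mascheroni)) * (\<Sum>z\<in>UNIV. exp (a z)))"
    by (simp add: sum_distrib_left sum_negf exp_add[symmetric] algebra_simps)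
  also have "\<dots> = - exp (- (t - ln (\<Sum>z\<in>UNIV. exp (a z)) + euler_mascheroni))"
    using S by (simp add: exp_diff exp_minus field_simps exp_add)
  finally show ?thesis by (simp add: F0_def)
qed

lemma prob_space_iid: "prob_space (iid_gumbel :: ('i::finite \<Rightarrow> real) measure)"
  unfolding iid_gumbel_def by (rule prob_space_PiM) (simp add: prob_space_gumbel)

lemma space_iid[simp]: "space (iid_gumbel :: ('i::finite \<Rightarrow> real) measure) = UNIV"
  unfolding iid_gumbel_def by (simp add: space_PiM PiE_UNIV_domain)

lemma max_gumbel_distr:
  fixes a :: "'i::finite \<Rightarrow> real"
  defines "L \<equiv> ln (\<Sum>z\<in>UNIV. exp (a z))"
  shows "distr iid_gumbel borel (\<lambda>e. Max (range (\<lambda>z. a z + e z))) = distr centered_gumbel borel (\<lambda>s. s + L)"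
proof (rule cdf_unique)
  have meas: "(\<lambda>e. Max (range (\<lambda>z. a z + e z))) \<in> borel_measurable (iid_gumbel :: ('i \<Rightarrow> real) measure)"
    unfolding iid_gumbel_def
    by (intro borel_measurable_Max) auto
  show "real_distribution (distr iid_gumbel borel (\<lambda>e. Max (range (\<lambda>z. a z + e z))))"
    unfolding real_distribution_def real_distribution_axioms_def
    using prob_space.prob_space_distr[OF prob_space_iid meas] by simp
  show "real_distribution (distr centered_gumbel borel (\<lambda>s. s + L))"
    unfolding real_distribution_def real_distribution_axioms_def
    using prob_space.prob_space_distr[OF prob_space_gumbel, of "\<lambda>s. s + L" borel] by simp
  show "cdf (distr iid_gumbel borel (\<lambda>e. Max (range (\<lambda>z. a z + e z)))) = cdf (distr centered_gumbel borel (\<lambda>s. s + L))"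
  proof
    fix t
    have ps: "product_sigma_finite (\<lambda>_::'i. centered_gumbel)"
      unfolding product_sigma_finite_def
      using prob_space_imp_sigma_finite[OF prob_space_gumbel] by simp
    have set: "(\<lambda>e. Max (range (\<lambda>z. a z + e z))) -` {..t} = Pi\<^sub>E UNIV (\<lambda>z. {..t - a z})"
      by (auto simp: PiE_UNIV_domain Pi_iff algebra_simps)
    have "emeasure (distr iid_gumbel borel (\<lambda>e. Max (range (\<lambda>z. a z + e z)))) {..t}
        = emeasure iid_gumbel (Pi\<^sub>E UNIV (\<lambda>z. {..t - a z}))"
      using meas by (subst emeasure_distr) (auto simp: set)
    also have "\<dots> = (\<Prod>z\<in>UNIV. emeasure centered_gumbel {..t - a z})"
      unfolding iid_gumbel_def
      by (rule product_sigma_finite.emeasure_PiM[OF ps]) auto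
    also have "\<dots> = ennreal (\<Prod>z\<in>UNIV. F0 (t - a z))"
      by (simp add: gumbel_emeasure_atMost prod_ennreal F0_def)
    also have "\<dots> = ennreal (F0 (t - L))"
      by (simp add: F0_shift_prod L_def)
    also have "\<dots> = emeasure (distr centered_gumbel borel (\<lambda>s. s + L)) {..t}"
    proof -
      have "(\<lambda>s. s + L) -` {..t} \<inter> space centered_gumbel = {..t - L}" by auto
      then show ?thesis by (subst emeasure_distr) (auto simp: gumbel_emeasure_atMost)
    qed
    finally show "cdf (distr iid_gumbel borel (\<lambda>e. Max (range (\<lambda>z. a z + e z)))) t = cdf (distr centered_gumbel borel (\<lambda>s. s + L)) t"
      by (simp add: cdf_def measure_def)
  qed
qed

lemma max_gumbel:
  fixes a :: "'i::finite \<Rightarrow> real"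
  shows "(\<integral>e. Max (range (\<lambda>z. a z + e z)) \<partial>iid_gumbel) = ln (\<Sum>z\<in>UNIV. exp (a z))"
proof -
  define L where "L = ln (\<Sum>z\<in>UNIV. exp (a z))"
  have meas: "(\<lambda>e. Max (range (\<lambda>z. a z + e z))) \<in> borel_measurable (iid_gumbel :: ('i \<Rightarrow> real) measure)"
    unfolding iid_gumbel_def
    by (intro borel_measurable_Max) auto
  have "(\<integral>e. Max (range (\<lambda>z. a z + e z)) \<partial>iid_gumbel) = (\<integral>x. x \<partial>distr iid_gumbel borel (\<lambda>e. Max (range (\<lambda>z. a z + e z))))"
    using meas by (subst integral_distr) auto
  also have "\<dots> = (\<integral>x. x \<partial>distr centered_gumbel borel (\<lambda>s. s + L))"
    by (simp add: max_gumbel_distr L_def)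
  also have "\<dots> = (\<integral>s. s + L \<partial>centered_gumbel)"
    by (subst integral_distr) auto
  also have "\<dots> = (\<integral>s. s \<partial>centered_gumbel) + (\<integral>s. L \<partial>centered_gumbel)"
    using gumbel_mean finite_measure.integrable_const[OF prob_space.finite_measure[OF prob_space_gumbel]]
    by (intro Bochner_Integration.integral_add) (auto simp: has_bochner_integral_iff)
  also have "\<dots> = L"
    using gumbel_mean prob_space.prob_space[OF prob_space_gumbel]
    by (simp add: has_bochner_integral_iff measure_def)
  finally show ?thesis by (simp add: L_def)
qed

definition cval :: "('j::finite \<Rightarrow> real) \<Rightarrow> real \<Rightarrow> ('j \<Rightarrow> real) \<Rightarrow> real" where
  "cval c n w = (\<Sum>j\<in>UNIV. c j * w j) - n * ln (1 + (\<Sum>j\<in>UNIV. exp (w j)))"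

definition cent :: "('j::finite \<Rightarrow> real) \<Rightarrow> real \<Rightarrow> real" where
  "cent c n = (\<Sum>j\<in>UNIV. c j * ln (c j / n)) + (n - sum c UNIV) * ln ((n - sum c UNIV) / n)"

lemma term_bound:
  fixes c n S v :: real
  assumes c: "0 \<le> c" and n: "0 < n" and S: "0 < S"
  shows "c * v - c * ln (c / n) - c * ln S \<le> n * exp v / S - c"
proof (cases "c = 0")
  case True then show ?thesis using n S by simp
next
  case False
  then have cp: "0 < c" using c by simp
  have q: "0 < n * exp v / (c * S)" using cp n S by simp
  have "c * v - c * ln (c / n) - c * ln S = c * ln (n * exp v / (c * S))"
    using cp n S by (simp add: ln_div ln_mult algebra_simps)
  also have "\<dots> \<le> c * (n * exp v / (c * S) - 1)"
    using ln_le_minus_one[OF q] cp by (intro mult_left_mono) auto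
  also have "\<dots> = n * exp v / S - c" using cp S by (simp add: field_simps)
  finally show ?thesis .
qed

lemma cval_le_cent:
  fixes c :: "'j::finite \<Rightarrow> real"
  assumes c: "\<And>j. 0 \<le> c j" and n: "0 < n" and c0: "0 \<le> n - sum c UNIV"
  shows "cval c n w \<le> cent c n"
proof -
  define S where "S = 1 + (\<Sum>j\<in>UNIV. exp (w j))"
  have S: "0 < S" unfolding S_def by (intro add_pos_nonneg sum_nonneg) auto
  define c0 where "c0 = n - sum c UNIV"
  have "cval c n w - cent c n
      = (\<Sum>j\<in>UNIV. c j * w j - c j * ln (c j / n) - c j * ln S) + (c0 * 0 - c0 * ln (c0 / n) - c0 * ln S)"
  proof -
    have "(\<Sum>j\<in>UNIV. c j * ln S) = sum c UNIV * ln S" by (simp add: sum_distrib_right)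
    then have "n * ln S = (\<Sum>j\<in>UNIV. c j * ln S) + c0 * ln S"
      by (simp add: c0_def algebra_simps)
    then show ?thesis
      by (simp add: cval_def cent_def S_def[symmetric] c0_def[symmetric] sum_subtractf sum.distrib algebra_simps)
  qed
  also have "\<dots> \<le> (\<Sum>j\<in>UNIV. n * exp (w j) / S - c j) + (n * exp 0 / S - c0)"
    by (intro add_mono sum_mono term_bound) (use c n S c0 in \<open>auto simp: c0_def\<close>)
  also have "\<dots> = 0"
  proof -
    define T where "T = (\<Sum>j\<in>UNIV. exp (w j))"
    have ST: "S = 1 + T" by (simp add: S_def T_def)
    have "(\<Sum>j\<in>UNIV. n * exp (w j) / S) = n * T / S"
      by (simp add: T_def sum_divide_distrib[symmetric] sum_distrib_left[symmetric])
    then have "(\<Sum>j\<in>UNIV. n * exp (w j) / S) + n / S = n * S / S"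
      by (simp add: ST add_divide_distrib[symmetric] algebra_simps)
    then show ?thesis using S by (simp add: sum_subtractf c0_def)
  qed
  finally show ?thesis by simp
qed

lemma cval_ln_form:
  fixes c d :: "'j::finite \<Rightarrow> real"
  assumes d: "\<And>j. 0 < d j" and d0: "0 < d0"
  shows "cval c n (\<lambda>j. ln (d j) - ln d0)
     = (\<Sum>j\<in>UNIV. c j * ln (d j)) + (n - sum c UNIV) * ln d0 - n * ln (d0 + sum d UNIV)"
proof -
  have e: "(\<Sum>j\<in>UNIV. exp (ln (d j) - ln d0)) = sum d UNIV / d0"
    using d d0 by (simp add: exp_diff sum_divide_distrib)
  have pos: "0 < d0 + sum d UNIV" using d d0 by (intro add_pos_nonneg sum_nonneg) (auto intro: less_imp_le)
  have "1 + sum d UNIV / d0 = (d0 + sum d UNIV) / d0" using d0 by (simp add: field_simps)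
  then have hh: "ln (1 + sum d UNIV / d0) = ln (d0 + sum d UNIV) - ln d0"
    using d0 pos by (simp add: ln_div)
  have L: "n * ln (1 + sum d UNIV / d0) = n * ln (d0 + sum d UNIV) - n * ln d0"
    using arg_cong[OF hh, of "\<lambda>z. n * z"] by (simp add: algebra_simps)
  have "(\<Sum>j\<in>UNIV. c j * (ln (d j) - ln d0)) = (\<Sum>j\<in>UNIV. c j * ln (d j)) - sum c UNIV * ln d0"
    by (simp add: right_diff_distrib sum_subtractf sum_distrib_right)
  then show ?thesis
    unfolding cval_def e L by (simp add: algebra_simps)
qed

lemma cent_alt:
  fixes c :: "'j::finite \<Rightarrow> real"
  assumes c: "\<And>j. 0 \<le> c j" and n: "0 < n" and c0: "0 \<le> n - sum c UNIV"
  shows "cent c n = (\<Sum>j\<in>UNIV. c j * ln (c j)) + (n - sum c UNIV) * ln (n - sum c UNIV) - n * ln n"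
proof -
  have t: "a * ln (a / n) = a * ln a - a * ln n" if "0 \<le> a" for a
    using that n by (cases "a = 0") (auto simp: ln_div algebra_simps)
  have t0: "(n - sum c UNIV) * ln ((n - sum c UNIV) / n) = (n - sum c UNIV) * ln (n - sum c UNIV) - (n - sum c UNIV) * ln n"
    by (rule t) (rule c0)
  have "(\<Sum>j\<in>UNIV. c j * ln (c j / n)) = (\<Sum>j\<in>UNIV. c j * ln (c j) - c j * ln n)"
    by (rule sum.cong) (use t c in auto)
  also have "\<dots> = (\<Sum>j\<in>UNIV. c j * ln (c j)) - sum c UNIV * ln n"
    by (simp add: sum_subtractf sum_distrib_right)
  finally show ?thesis
    unfolding cent_def t0 by (simp add: algebra_simps)
qed

lemma cval_attain:
  fixes c :: "'j::finite \<Rightarrow> real"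
  assumes c: "\<And>j. 0 < c j" and n: "0 < n" and c0: "0 < n - sum c UNIV"
  shows "cval c n (\<lambda>j. ln (c j) - ln (n - sum c UNIV)) = cent c n"
  using cval_ln_form[of c "n - sum c UNIV" c n] cent_alt[of c n] c n c0
  by (simp add: less_imp_le)

lemma cval_approx:
  fixes c :: "'j::finite \<Rightarrow> real"
  assumes c: "\<And>j. 0 \<le> c j" and n: "0 < n" and c0: "0 \<le> n - sum c UNIV"
  shows "((\<lambda>e. cval c n (\<lambda>j. ln (c j + e) - ln (n - sum c UNIV + e))) \<longlongrightarrow> cent c n) (at_right 0)"
proof -
  define c0 where "c0 = n - sum c UNIV"
  have clim: "((\<lambda>e. a * ln (a + e)) \<longlongrightarrow> a * ln a) (at_right 0)" if "0 \<le> a" for a :: real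
  proof (cases "a = 0")
    case True then show ?thesis by simp
  next
    case False
    then have "0 < a" using that by simp
    have "((\<lambda>e. a * ln (a + e)) \<longlongrightarrow> a * ln (a + 0)) (at 0)"
      using \<open>0 < a\<close> by (intro tendsto_intros) auto
    then show ?thesis by (simp add: tendsto_at_iff_tendsto_nhds_within filterlim_at_split)
  qed
  have l1: "((\<lambda>e. \<Sum>j\<in>UNIV. c j * ln (c j + e)) \<longlongrightarrow> (\<Sum>j\<in>UNIV. c j * ln (c j))) (at_right 0)"
    by (intro tendsto_sum clim c)
  have l2: "((\<lambda>e. c0 * ln (c0 + e)) \<longlongrightarrow> c0 * ln c0) (at_right 0)"
    by (intro clim) (use c0 in \<open>simp add: c0_def\<close>)
  have l3: "((\<lambda>e. c0 + e + (\<Sum>j\<in>UNIV. c j + e)) \<longlongrightarrow> c0 + sum c UNIV) (at_right 0)"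
  proof -
    have "((\<lambda>e. c0 + e + (\<Sum>j\<in>UNIV. c j + e)) \<longlongrightarrow> c0 + 0 + (\<Sum>j\<in>UNIV. c j + 0)) (at_right 0)"
      by (intro tendsto_intros)
    then show ?thesis by simp
  qed
  have l4: "((\<lambda>e. n * ln (c0 + e + (\<Sum>j\<in>UNIV. c j + e))) \<longlongrightarrow> n * ln (c0 + sum c UNIV)) (at_right 0)"
    by (intro tendsto_intros l3) (use n in \<open>simp add: c0_def\<close>)
  have "((\<lambda>e. (\<Sum>j\<in>UNIV. c j * ln (c j + e)) + c0 * ln (c0 + e) - n * ln (c0 + e + sum (\<lambda>j. c j + e) UNIV))
      \<longlongrightarrow> (\<Sum>j\<in>UNIV. c j * ln (c j)) + c0 * ln c0 - n * ln (c0 + sum c UNIV)) (at_right 0)"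
    by (intro tendsto_diff tendsto_add l1 l2 l4)
  moreover have "\<forall>\<^sub>F e in at_right 0. (\<Sum>j\<in>UNIV. c j * ln (c j + e)) + c0 * ln (c0 + e) - n * ln (c0 + e + sum (\<lambda>j. c j + e) UNIV)
     = cval c n (\<lambda>j. ln (c j + e) - ln (n - sum c UNIV + e))"
  proof -
    have "\<forall>\<^sub>F e in at_right (0::real). 0 < e" by (simp add: eventually_at_right_less)
    then show "\<forall>\<^sub>F e in at_right 0. (\<Sum>j\<in>UNIV. c j * ln (c j + e)) + c0 * ln (c0 + e) - n * ln (c0 + e + sum (\<lambda>j. c j + e) UNIV)
     = cval c n (\<lambda>j. ln (c j + e) - ln (n - sum c UNIV + e))"
    proof eventually_elim
      case (elim e)
      show ?case
        using cval_ln_form[of "\<lambda>j. c j + e" "c0 + e" c n] c c0 elim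
        by (simp add: c0_def add_nonneg_pos add_pos_nonneg algebra_simps)
    qed
  qed
  ultimately have "((\<lambda>e. cval c n (\<lambda>j. ln (c j + e) - ln (n - sum c UNIV + e))) \<longlongrightarrow>
     (\<Sum>j\<in>UNIV. c j * ln (c j)) + c0 * ln c0 - n * ln (c0 + sum c UNIV)) (at_right 0)"
    by (rule Lim_transform_eventually)
  then show ?thesis
    using cent_alt[OF c n c0] by (simp add: c0_def)
qed

lemma cval_foc:
  fixes c :: "'j::finite \<Rightarrow> real"
  assumes max: "\<And>w'. cval c n w' \<le> cval c n w"
  shows "c j = n * exp (w j) / (1 + (\<Sum>i\<in>UNIV. exp (w i)))"
proof -
  define d where "d i = (if i = j then 1 else (0::real))" for i
  define f where "f t = cval c n (\<lambda>i. w i + t * d i)" for t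
  define S where "S = 1 + (\<Sum>i\<in>UNIV. exp (w i))"
  have S: "0 < S" unfolding S_def by (intro add_pos_nonneg sum_nonneg) auto
  have Dsum: "((\<lambda>t. 1 + (\<Sum>i\<in>UNIV. exp (w i + t * d i))) has_real_derivative (\<Sum>i\<in>UNIV. exp (w i + 0 * d i) * d i)) (at 0)"
    by (intro derivative_eq_intros DERIV_sum) auto
  have Dlin: "((\<lambda>t. (\<Sum>i\<in>UNIV. c i * (w i + t * d i))) has_real_derivative (\<Sum>i\<in>UNIV. c i * d i)) (at 0)"
    by (intro derivative_eq_intros DERIV_sum) auto
  have Dln: "((\<lambda>t. ln (1 + (\<Sum>i\<in>UNIV. exp (w i + t * d i)))) has_real_derivative
      (\<Sum>i\<in>UNIV. exp (w i + 0 * d i) * d i) / (1 + (\<Sum>i\<in>UNIV. exp (w i + 0 * d i)))) (at 0)"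
  proof -
    have "0 < 1 + (\<Sum>i\<in>UNIV. exp (w i + 0 * d i))" using S by (simp add: S_def)
    from DERIV_chain2[OF DERIV_ln[OF this] Dsum] show ?thesis by (simp add: field_simps)
  qed
  have D: "(f has_real_derivative (\<Sum>i\<in>UNIV. c i * d i) - n * ((\<Sum>i\<in>UNIV. exp (w i + 0 * d i) * d i) / (1 + (\<Sum>i\<in>UNIV. exp (w i + 0 * d i))))) (at 0)"
    unfolding f_def cval_def
    by (intro DERIV_diff Dlin DERIV_cmult Dln)
  have "(\<Sum>i\<in>UNIV. c i * d i) - n * ((\<Sum>i\<in>UNIV. exp (w i + 0 * d i) * d i) / (1 + (\<Sum>i\<in>UNIV. exp (w i + 0 * d i))))
     = c j - n * (exp (w j) / S)"
    by (simp add: d_def S_def if_distrib cong: if_cong)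
  with D have D': "(f has_real_derivative c j - n * (exp (w j) / S)) (at 0)" by simp
  have "c j - n * (exp (w j) / S) = 0"
  proof (rule DERIV_local_max[OF D' zero_less_one], intro allI impI)
    fix y :: real
    show "f y \<le> f 0" unfolding f_def using max by simp
  qed
  then show ?thesis by (simp add: S_def)
qed

lemma exp_conv:
  fixes a b t :: real assumes "0 \<le> t" "t \<le> 1"
  shows "exp (t * a + (1 - t) * b) \<le> t * exp a + (1 - t) * exp b"
  using convex_onD[OF exp_convex, of t b a] assms by (simp add: algebra_simps)

lemma exp_strict_conv:
  fixes a b t :: real assumes ab: "a \<noteq> b" and t: "0 < t" "t < 1"
  shows "exp (t * a + (1 - t) * b) < t * exp a + (1 - t) * exp b"
proof -
  define c where "c = t * a + (1 - t) * b"
  have "a - c = (1 - t) * (a - b)" by (simp add: c_def algebra_simps)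
  then have ac: "a - c \<noteq> 0" using ab t by simp
  have "b - c = t * (b - a)" by (simp add: c_def algebra_simps)
  then have bc: "b - c \<noteq> 0" using ab t by simp
  have ea: "exp c * (1 + (a - c)) < exp a"
  proof -
    have "1 + (a - c) < exp (a - c)" using exp_minus_greater[of "-(a - c)"] ac by simp
    then have "exp c * (1 + (a - c)) < exp c * exp (a - c)" by simp
    then show ?thesis by (simp add: exp_diff)
  qed
  have eb: "exp c * (1 + (b - c)) < exp b"
  proof -
    have "1 + (b - c) < exp (b - c)" using exp_minus_greater[of "-(b - c)"] bc by simp
    then have "exp c * (1 + (b - c)) < exp c * exp (b - c)" by simp
    then show ?thesis by (simp add: exp_diff)
  qed
  have "t * (exp c * (1 + (a - c))) + (1 - t) * (exp c * (1 + (b - c))) < t * exp a + (1 - t) * exp b"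
    using ea eb t by (intro add_strict_mono mult_strict_left_mono) auto
  moreover have "t * (exp c * (1 + (a - c))) + (1 - t) * (exp c * (1 + (b - c))) = exp c"
    by (simp add: c_def algebra_simps)
  ultimately show ?thesis by (simp add: c_def)
qed

lemma sep_conv:
  fixes n s s' t :: real assumes n: "0 < n" and t: "0 < t" "t < 1"
  shows "n * ((t * s + (1 - t) * s') + exp (- (t * s + (1 - t) * s')) - 1)
     \<le> t * (n * (s + exp (- s) - 1)) + (1 - t) * (n * (s' + exp (- s') - 1))"
    and "s \<noteq> s' \<Longrightarrow> n * ((t * s + (1 - t) * s') + exp (- (t * s + (1 - t) * s')) - 1)
     < t * (n * (s + exp (- s) - 1)) + (1 - t) * (n * (s' + exp (- s') - 1))"
proof -
  have e: "- (t * s + (1 - t) * s') = t * (- s) + (1 - t) * (- s')" by (simp add: algebra_simps)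
  have "exp (- (t * s + (1 - t) * s')) \<le> t * exp (- s) + (1 - t) * exp (- s')"
    unfolding e using t by (intro exp_conv) auto
  then have "n * exp (- (t * s + (1 - t) * s')) \<le> n * (t * exp (- s) + (1 - t) * exp (- s'))"
    using n by simp
  then show "n * ((t * s + (1 - t) * s') + exp (- (t * s + (1 - t) * s')) - 1)
     \<le> t * (n * (s + exp (- s) - 1)) + (1 - t) * (n * (s' + exp (- s') - 1))"
    by (simp add: algebra_simps)
  assume ss: "s \<noteq> s'"
  have "exp (- (t * s + (1 - t) * s')) < t * exp (- s) + (1 - t) * exp (- s')"
    unfolding e using t ss by (intro exp_strict_conv) auto
  then have "n * exp (- (t * s + (1 - t) * s')) < n * (t * exp (- s) + (1 - t) * exp (- s'))"
    using n by simp
  then show "n * ((t * s + (1 - t) * s') + exp (- (t * s + (1 - t) * s')) - 1)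
     < t * (n * (s + exp (- s) - 1)) + (1 - t) * (n * (s' + exp (- s') - 1))"
    by (simp add: algebra_simps)
qed

lemma Ffun_strict_conv:
  fixes Phi :: "'x::finite \<Rightarrow> 'y::finite \<Rightarrow> real"
  assumes n: "\<forall>x. 0 < n x" and m: "\<forall>y. 0 < m y"
    and ne: "(u, v) \<noteq> (u', v')" and t: "0 < t" "t < 1"
  shows "Ffun Phi n m (\<lambda>x. t * u x + (1 - t) * u' x) (\<lambda>y. t * v y + (1 - t) * v' y)
            < t * Ffun Phi n m u v + (1 - t) * Ffun Phi n m u' v'"
proof -
  define A where "A x s = n x * (s + exp (- s) - 1)" for x s
  define B where "B y s = m y * (s + exp (- s) - 1)" for y s
  define C where "C x y p q = sqrt (n x * m y) * exp ((Phi x y - p - q) / 2)" for x y p q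
  have Feq: "Ffun Phi n m u v = (\<Sum>x\<in>UNIV. A x (u x)) + (\<Sum>y\<in>UNIV. B y (v y)) + 2 * (\<Sum>x\<in>UNIV. \<Sum>y\<in>UNIV. C x y (u x) (v y))"
    for u v by (simp add: Ffun_def A_def B_def C_def)
  have Ale: "A x (t * u x + (1 - t) * u' x) \<le> t * A x (u x) + (1 - t) * A x (u' x)" for x
    unfolding A_def using sep_conv(1)[of "n x" t "u x" "u' x"] n t by simp
  have Alt: "u x \<noteq> u' x \<Longrightarrow> A x (t * u x + (1 - t) * u' x) < t * A x (u x) + (1 - t) * A x (u' x)" for x
    unfolding A_def using sep_conv(2)[of "n x" t "u x" "u' x"] n t by simp
  have Ble: "B y (t * v y + (1 - t) * v' y) \<le> t * B y (v y) + (1 - t) * B y (v' y)" for y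
    unfolding B_def using sep_conv(1)[of "m y" t "v y" "v' y"] m t by simp
  have Blt: "v y \<noteq> v' y \<Longrightarrow> B y (t * v y + (1 - t) * v' y) < t * B y (v y) + (1 - t) * B y (v' y)" for y
    unfolding B_def using sep_conv(2)[of "m y" t "v y" "v' y"] m t by simp
  have Cle: "C x y (t * u x + (1 - t) * u' x) (t * v y + (1 - t) * v' y) \<le> t * C x y (u x) (v y) + (1 - t) * C x y (u' x) (v' y)" for x y
  proof -
    have e: "(Phi x y - (t * u x + (1 - t) * u' x) - (t * v y + (1 - t) * v' y)) / 2
      = t * ((Phi x y - u x - v y) / 2) + (1 - t) * ((Phi x y - u' x - v' y) / 2)"
      by (simp add: algebra_simps add_divide_distrib diff_divide_distrib)
    have "exp ((Phi x y - (t * u x + (1 - t) * u' x) - (t * v y + (1 - t) * v' y)) / 2)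
      \<le> t * exp ((Phi x y - u x - v y) / 2) + (1 - t) * exp ((Phi x y - u' x - v' y) / 2)"
      unfolding e using t by (intro exp_conv) auto
    then have "sqrt (n x * m y) * exp ((Phi x y - (t * u x + (1 - t) * u' x) - (t * v y + (1 - t) * v' y)) / 2)
      \<le> sqrt (n x * m y) * (t * exp ((Phi x y - u x - v y) / 2) + (1 - t) * exp ((Phi x y - u' x - v' y) / 2))"
      by (intro mult_left_mono) (use n m in \<open>auto intro: mult_nonneg_nonneg less_imp_le\<close>)
    then show ?thesis by (simp add: C_def algebra_simps)
  qed
  have sA: "(\<Sum>x\<in>UNIV. A x (t * u x + (1 - t) * u' x)) \<le> (\<Sum>x\<in>UNIV. t * A x (u x) + (1 - t) * A x (u' x))"
    by (intro sum_mono Ale)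
  have sB: "(\<Sum>y\<in>UNIV. B y (t * v y + (1 - t) * v' y)) \<le> (\<Sum>y\<in>UNIV. t * B y (v y) + (1 - t) * B y (v' y))"
    by (intro sum_mono Ble)
  have sC: "(\<Sum>x\<in>UNIV. \<Sum>y\<in>UNIV. C x y (t * u x + (1 - t) * u' x) (t * v y + (1 - t) * v' y))
      \<le> (\<Sum>x\<in>UNIV. \<Sum>y\<in>UNIV. t * C x y (u x) (v y) + (1 - t) * C x y (u' x) (v' y))"
    by (intro sum_mono Cle)
  have strict: "(\<Sum>x\<in>UNIV. A x (t * u x + (1 - t) * u' x)) + (\<Sum>y\<in>UNIV. B y (t * v y + (1 - t) * v' y))
      < (\<Sum>x\<in>UNIV. t * A x (u x) + (1 - t) * A x (u' x)) + (\<Sum>y\<in>UNIV. t * B y (v y) + (1 - t) * B y (v' y))"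
  proof (cases "u = u'")
    case False
    then obtain x where "u x \<noteq> u' x" by auto
    then have "(\<Sum>x\<in>UNIV. A x (t * u x + (1 - t) * u' x)) < (\<Sum>x\<in>UNIV. t * A x (u x) + (1 - t) * A x (u' x))"
      by (intro sum_strict_mono_ex1) (auto intro: Ale Alt)
    with sB show ?thesis by simp
  next
    case True
    with ne have "v \<noteq> v'" by auto
    then obtain y where "v y \<noteq> v' y" by auto
    then have "(\<Sum>y\<in>UNIV. B y (t * v y + (1 - t) * v' y)) < (\<Sum>y\<in>UNIV. t * B y (v y) + (1 - t) * B y (v' y))"
      by (intro sum_strict_mono_ex1) (auto intro: Ble Blt)
    with sA show ?thesis by simp
  qed
  have R: "t * Ffun Phi n m u v + (1 - t) * Ffun Phi n m u' v' =
     (\<Sum>x\<in>UNIV. t * A x (u x) + (1 - t) * A x (u' x)) + (\<Sum>y\<in>UNIV. t * B y (v y) + (1 - t) * B y (v' y))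
     + 2 * (\<Sum>x\<in>UNIV. \<Sum>y\<in>UNIV. t * C x y (u x) (v y) + (1 - t) * C x y (u' x) (v' y))"
  proof -
    have l: "(\<Sum>i\<in>I. t * f i + (1 - t) * g i) = t * sum f I + (1 - t) * sum g I" for I and f g :: "'z \<Rightarrow> real"
      by (simp add: sum.distrib sum_distrib_left)
    have l2: "(\<Sum>x\<in>UNIV. \<Sum>y\<in>UNIV. t * C x y (u x) (v y) + (1 - t) * C x y (u' x) (v' y))
       = t * (\<Sum>x\<in>UNIV. \<Sum>y\<in>UNIV. C x y (u x) (v y)) + (1 - t) * (\<Sum>x\<in>UNIV. \<Sum>y\<in>UNIV. C x y (u' x) (v' y))"
      by (simp add: l)
    show ?thesis unfolding Feq l l2 by (simp add: algebra_simps)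
  qed
  show ?thesis
    unfolding R using Feq[of "\<lambda>x. t * u x + (1 - t) * u' x" "\<lambda>y. t * v y + (1 - t) * v' y"] strict sC
    by linarith
qed

lemma cont_vec_nth_intro[continuous_intros]:
  fixes f :: "'a::topological_space \<Rightarrow> real^'i"
  shows "continuous_on s f \<Longrightarrow> continuous_on s (\<lambda>z. f z $ i)"
  using continuous_on_compose[OF _ linear_continuous_on[OF bounded_linear_vec_nth[of i]], of s f]
  by (simp add: o_def)

lemma sep_lower: "\<bar>s\<bar> - 1 \<le> s + exp (- s) - (1::real)"
proof (cases "0 \<le> s")
  case True then show ?thesis by (simp add: less_imp_le)
next
  case False
  have "1 + (- s / 2) \<le> exp (- s / 2)" by (rule exp_ge_add_one_self)
  moreover have "0 \<le> 1 + (- s / 2)" using False by simp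
  ultimately have "(1 + (- s / 2))^2 \<le> (exp (- s / 2))^2" by (intro power_mono)
  also have "(exp (- s / 2))^2 = exp (- s)" by (simp add: power2_eq_square exp_add[symmetric])
  finally have "(1 + (- s / 2))^2 \<le> exp (- s)" .
  moreover have "- 2 * s \<le> (1 + (- s / 2))^2"
  proof -
    have "(1 + (- s / 2))^2 - (- 2 * s) = (1 + s / 2)^2" by (simp add: power2_eq_square algebra_simps)
    then show ?thesis by (smt (verit) zero_le_power2)
  qed
  ultimately show ?thesis using False by simp
qed

lemma sep_nonneg: "0 \<le> s + exp (- s) - (1::real)"
  using exp_ge_add_one_self[of "-s"] by simp

lemma Ffun_lower_u:
  fixes Phi :: "'x::finite \<Rightarrow> 'y::finite \<Rightarrow> real"
  assumes n: "\<forall>x. 0 < n x" and m: "\<forall>y. 0 < m y"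
  shows "n x * (\<bar>u x\<bar> - 1) \<le> Ffun Phi n m u v"
proof -
  have "n x * (\<bar>u x\<bar> - 1) \<le> n x * (u x + exp (- u x) - 1)"
    using n sep_lower[of "u x"] by (intro mult_left_mono) (auto intro: less_imp_le)
  also have "\<dots> \<le> (\<Sum>x\<in>UNIV. n x * (u x + exp (- u x) - 1))"
    by (rule member_le_sum) (use mult_nonneg_nonneg[OF less_imp_le[OF n[rule_format]] sep_nonneg] in auto)
  also have "\<dots> \<le> Ffun Phi n m u v"
  proof -
    have "0 \<le> (\<Sum>y\<in>UNIV. m y * (v y + exp (- v y) - 1))"
      by (rule sum_nonneg) (use mult_nonneg_nonneg[OF less_imp_le[OF m[rule_format]] sep_nonneg] in auto)
    moreover have "0 \<le> (\<Sum>x\<in>UNIV. \<Sum>y\<in>UNIV. sqrt (n x * m y) * exp ((Phi x y - u x - v y) / 2))"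
      by (intro sum_nonneg mult_nonneg_nonneg) (use n m in \<open>auto intro: less_imp_le\<close>)
    ultimately show ?thesis unfolding Ffun_def by simp
  qed
  finally show ?thesis .
qed

lemma Ffun_lower_v:
  fixes Phi :: "'x::finite \<Rightarrow> 'y::finite \<Rightarrow> real"
  assumes n: "\<forall>x. 0 < n x" and m: "\<forall>y. 0 < m y"
  shows "m y * (\<bar>v y\<bar> - 1) \<le> Ffun Phi n m u v"
proof -
  have "m y * (\<bar>v y\<bar> - 1) \<le> m y * (v y + exp (- v y) - 1)"
    using m sep_lower[of "v y"] by (intro mult_left_mono) (auto intro: less_imp_le)
  also have "\<dots> \<le> (\<Sum>y\<in>UNIV. m y * (v y + exp (- v y) - 1))"
    by (rule member_le_sum) (use mult_nonneg_nonneg[OF less_imp_le[OF m[rule_format]] sep_nonneg] in auto)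
  also have "\<dots> \<le> Ffun Phi n m u v"
  proof -
    have "0 \<le> (\<Sum>x\<in>UNIV. n x * (u x + exp (- u x) - 1))"
      by (rule sum_nonneg) (use mult_nonneg_nonneg[OF less_imp_le[OF n[rule_format]] sep_nonneg] in auto)
    moreover have "0 \<le> (\<Sum>x\<in>UNIV. \<Sum>y\<in>UNIV. sqrt (n x * m y) * exp ((Phi x y - u x - v y) / 2))"
      by (intro sum_nonneg mult_nonneg_nonneg) (use n m in \<open>auto intro: less_imp_le\<close>)
    ultimately show ?thesis unfolding Ffun_def by simp
  qed
  finally show ?thesis .
qed

lemma Ffun_exists_min:
  fixes Phi :: "'x::finite \<Rightarrow> 'y::finite \<Rightarrow> real"
  assumes n: "\<forall>x. 0 < n x" and m: "\<forall>y. 0 < m y"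
  shows "\<exists>u v. \<forall>u' v'. Ffun Phi n m u v \<le> Ffun Phi n m u' v'"
proof -
  define Fv where "Fv z = Ffun Phi n m (\<lambda>x. fst z $ x) (\<lambda>y. snd z $ y)" for z :: "(real^'x) \<times> (real^'y)"
  define C0 where "C0 = Ffun Phi n m (\<lambda>_. 0) (\<lambda>_. 0)"
  define R where "R = (\<Sum>x\<in>UNIV. C0 / n x + 1) + (\<Sum>y\<in>UNIV. C0 / m y + 1)"
  define K where "K = cball (0 :: (real^'x) \<times> (real^'y)) R"
  have F0: "Fv 0 = C0" by (simp add: Fv_def C0_def)
  have bound: "norm z \<le> R" if "Fv z \<le> C0" for z
  proof -
    have bx: "\<bar>fst z $ x\<bar> \<le> C0 / n x + 1" for x
    proof -
      have "n x * (\<bar>fst z $ x\<bar> - 1) \<le> C0"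
        using Ffun_lower_u[OF n m, of x "\<lambda>x. fst z $ x" Phi "\<lambda>y. snd z $ y"] that by (simp add: Fv_def)
      then have "\<bar>fst z $ x\<bar> - 1 \<le> C0 / n x" by (subst pos_le_divide_eq) (use n in \<open>auto simp: algebra_simps\<close>)
      then show ?thesis by simp
    qed
    have "by": "\<bar>snd z $ y\<bar> \<le> C0 / m y + 1" for y
    proof -
      have "m y * (\<bar>snd z $ y\<bar> - 1) \<le> C0"
        using Ffun_lower_v[OF n m, of y "\<lambda>y. snd z $ y" Phi "\<lambda>x. fst z $ x"] that by (simp add: Fv_def)
      then have "\<bar>snd z $ y\<bar> - 1 \<le> C0 / m y" by (subst pos_le_divide_eq) (use m in \<open>auto simp: algebra_simps\<close>)
      then show ?thesis by simp
    qed
    have "norm z \<le> norm (fst z) + norm (snd z)"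
      using norm_Pair_le[of "fst z" "snd z"] by simp
    also have "\<dots> \<le> (\<Sum>x\<in>UNIV. \<bar>fst z $ x\<bar>) + (\<Sum>y\<in>UNIV. \<bar>snd z $ y\<bar>)"
      by (intro add_mono norm_le_l1_cart)
    also have "\<dots> \<le> R" unfolding R_def by (intro add_mono sum_mono bx "by")
    finally show ?thesis .
  qed
  have "0 \<le> R"
    using bound[of 0] F0 by simp
  have cont: "continuous_on K Fv"
    unfolding Fv_def Ffun_def by (intro continuous_intros) auto
  have "compact K" "K \<noteq> {}" using \<open>0 \<le> R\<close> by (auto simp: K_def)
  from continuous_attains_inf[OF this cont] obtain z where z: "z \<in> K" "\<And>y. y \<in> K \<Longrightarrow> Fv z \<le> Fv y" by blast
  have zC: "Fv z \<le> C0" using z(2)[of 0] \<open>0 \<le> R\<close> F0 by (simp add: K_def)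
  show ?thesis
  proof (intro exI allI)
    fix u' :: "'x \<Rightarrow> real" and v' :: "'y \<Rightarrow> real"
    define z' where "z' = ((\<chi> x. u' x), (\<chi> y. v' y))"
    have Fz': "Fv z' = Ffun Phi n m u' v'" by (simp add: Fv_def z'_def)
    have "Fv z \<le> Fv z'"
    proof (cases "z' \<in> K")
      case True then show ?thesis using z by simp
    next
      case False
      then have "\<not> norm z' \<le> R" by (simp add: K_def)
      then have "\<not> Fv z' \<le> C0" using bound by blast
      then show ?thesis using zC by simp
    qed
    then show "Ffun Phi n m (\<lambda>x. fst z $ x) (\<lambda>y. snd z $ y) \<le> Ffun Phi n m u' v'"
      using Fz' by (simp add: Fv_def)
  qed
qed

lemma sum_delta_mult:
  fixes g :: "'a::finite \<Rightarrow> real"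
  shows "(\<Sum>x\<in>UNIV. (if x = a then 1 else 0) * g x) = g a"
proof -
  have "(\<Sum>x\<in>UNIV. (if x = a then 1 else 0) * g x) = (\<Sum>x\<in>UNIV. if x = a then g x else 0)"
    by (rule sum.cong) auto
  then show ?thesis by simp
qed

lemma Ffun_foc_u:
  fixes Phi :: "'x::finite \<Rightarrow> 'y::finite \<Rightarrow> real"
  assumes min: "\<forall>u' v'. Ffun Phi n m u v \<le> Ffun Phi n m u' v'"
  shows "n x0 * exp (- u x0) = n x0 - (\<Sum>y\<in>UNIV. sqrt (n x0 * m y) * exp ((Phi x0 y - u x0 - v y) / 2))"
proof -
  define d where "d x = (if x = x0 then 1 else (0::real))" for x
  define f where "f t = Ffun Phi n m (\<lambda>x. u x + t * d x) v" for t
  define K where "K = (\<Sum>y\<in>UNIV. m y * (v y + exp (- v y) - 1))"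
  have feq: "f t = (\<Sum>x\<in>UNIV. n x * ((u x + t * d x) + exp (- (u x + t * d x)) - 1)) + K
      + 2 * (\<Sum>x\<in>UNIV. \<Sum>y\<in>UNIV. sqrt (n x * m y) * exp ((Phi x y - (u x + t * d x) - v y) / 2))" for t
    by (simp add: f_def Ffun_def K_def)
  have D1: "((\<lambda>t. (\<Sum>x\<in>UNIV. n x * ((u x + t * d x) + exp (- (u x + t * d x)) - 1))) has_real_derivative
      (\<Sum>x\<in>UNIV. n x * (d x + exp (- (u x + 0 * d x)) * (- d x)))) (at 0)"
    by (intro DERIV_sum DERIV_cmult DERIV_diff DERIV_add derivative_eq_intros) auto
  have D2: "((\<lambda>t. (\<Sum>x\<in>UNIV. \<Sum>y\<in>UNIV. sqrt (n x * m y) * exp ((Phi x y - (u x + t * d x) - v y) / 2))) has_real_derivative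
      (\<Sum>x\<in>UNIV. \<Sum>y\<in>UNIV. sqrt (n x * m y) * (exp ((Phi x y - (u x + 0 * d x) - v y) / 2) * (- d x / 2)))) (at 0)"
  proof (intro DERIV_sum DERIV_cmult)
    fix x y
    have i: "((\<lambda>t. (Phi x y - (u x + t * d x) - v y) / 2) has_real_derivative (- d x / 2)) (at 0)"
      by (rule derivative_eq_intros refl | simp)+
    show "((\<lambda>t. exp ((Phi x y - (u x + t * d x) - v y) / 2)) has_real_derivative exp ((Phi x y - (u x + 0 * d x) - v y) / 2) * (- d x / 2)) (at 0)"
      using DERIV_chain2[OF DERIV_exp i] by simp
  qed
  have D: "(f has_real_derivative
      (\<Sum>x\<in>UNIV. n x * (d x + exp (- (u x + 0 * d x)) * (- d x))) + 0 +
      2 * (\<Sum>x\<in>UNIV. \<Sum>y\<in>UNIV. sqrt (n x * m y) * (exp ((Phi x y - (u x + 0 * d x) - v y) / 2) * (- d x / 2)))) (at 0)"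
    unfolding feq[abs_def] by (intro DERIV_add D1 D2 DERIV_cmult DERIV_const)
  have val: "(\<Sum>x\<in>UNIV. n x * (d x + exp (- (u x + 0 * d x)) * (- d x))) + 0 +
      2 * (\<Sum>x\<in>UNIV. \<Sum>y\<in>UNIV. sqrt (n x * m y) * (exp ((Phi x y - (u x + 0 * d x) - v y) / 2) * (- d x / 2)))
    = n x0 * (1 - exp (- u x0)) - (\<Sum>y\<in>UNIV. sqrt (n x0 * m y) * exp ((Phi x0 y - u x0 - v y) / 2))"
  proof -
    have a: "(\<Sum>x\<in>UNIV. n x * (d x + exp (- (u x + 0 * d x)) * (- d x))) = n x0 * (1 - exp (- u x0))"
      by (simp add: d_def if_distrib cong: if_cong)
    have b: "(\<Sum>x\<in>UNIV. \<Sum>y\<in>UNIV. sqrt (n x * m y) * (exp ((Phi x y - (u x + 0 * d x) - v y) / 2) * (- d x / 2)))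
        = (\<Sum>x\<in>UNIV. d x * (- (\<Sum>y\<in>UNIV. sqrt (n x * m y) * exp ((Phi x y - u x - v y) / 2)) / 2))"
      by (intro sum.cong refl) (simp add: sum_distrib_left sum_divide_distrib sum_negf[symmetric] algebra_simps)
    also have "\<dots> = - (\<Sum>y\<in>UNIV. sqrt (n x0 * m y) * exp ((Phi x0 y - u x0 - v y) / 2)) / 2"
      unfolding d_def by (rule sum_delta_mult)
    finally show ?thesis using a by simp
  qed
  have "n x0 * (1 - exp (- u x0)) - (\<Sum>y\<in>UNIV. sqrt (n x0 * m y) * exp ((Phi x0 y - u x0 - v y) / 2)) = 0"
  proof (rule DERIV_local_min[OF D[unfolded val] zero_less_one], intro allI impI)
    fix y :: real
    show "f 0 \<le> f y" using min by (simp add: f_def)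
  qed
  then show ?thesis by (simp add: algebra_simps)
qed

lemma Ffun_foc_v:
  fixes Phi :: "'x::finite \<Rightarrow> 'y::finite \<Rightarrow> real"
  assumes min: "\<forall>u' v'. Ffun Phi n m u v \<le> Ffun Phi n m u' v'"
  shows "m y0 * exp (- v y0) = m y0 - (\<Sum>x\<in>UNIV. sqrt (n x * m y0) * exp ((Phi x y0 - u x - v y0) / 2))"
proof -
  define d where "d y = (if y = y0 then 1 else (0::real))" for y
  define f where "f t = Ffun Phi n m u (\<lambda>y. v y + t * d y)" for t
  define K where "K = (\<Sum>x\<in>UNIV. n x * (u x + exp (- u x) - 1))"
  have feq: "f t = K + (\<Sum>y\<in>UNIV. m y * ((v y + t * d y) + exp (- (v y + t * d y)) - 1))
      + 2 * (\<Sum>x\<in>UNIV. \<Sum>y\<in>UNIV. sqrt (n x * m y) * exp ((Phi x y - u x - (v y + t * d y)) / 2))" for t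
    by (simp add: f_def Ffun_def K_def)
  have D1: "((\<lambda>t. (\<Sum>y\<in>UNIV. m y * ((v y + t * d y) + exp (- (v y + t * d y)) - 1))) has_real_derivative
      (\<Sum>y\<in>UNIV. m y * (d y + exp (- (v y + 0 * d y)) * (- d y)))) (at 0)"
    by (intro DERIV_sum DERIV_cmult DERIV_diff DERIV_add derivative_eq_intros) auto
  have D2: "((\<lambda>t. (\<Sum>x\<in>UNIV. \<Sum>y\<in>UNIV. sqrt (n x * m y) * exp ((Phi x y - u x - (v y + t * d y)) / 2))) has_real_derivative
      (\<Sum>x\<in>UNIV. \<Sum>y\<in>UNIV. sqrt (n x * m y) * (exp ((Phi x y - u x - (v y + 0 * d y)) / 2) * (- d y / 2)))) (at 0)"
  proof (intro DERIV_sum DERIV_cmult)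
    fix x y
    have i: "((\<lambda>t. (Phi x y - u x - (v y + t * d y)) / 2) has_real_derivative (- d y / 2)) (at 0)"
      by (rule derivative_eq_intros refl | simp)+
    show "((\<lambda>t. exp ((Phi x y - u x - (v y + t * d y)) / 2)) has_real_derivative exp ((Phi x y - u x - (v y + 0 * d y)) / 2) * (- d y / 2)) (at 0)"
      using DERIV_chain2[OF DERIV_exp i] by simp
  qed
  have D: "(f has_real_derivative
      0 + (\<Sum>y\<in>UNIV. m y * (d y + exp (- (v y + 0 * d y)) * (- d y))) +
      2 * (\<Sum>x\<in>UNIV. \<Sum>y\<in>UNIV. sqrt (n x * m y) * (exp ((Phi x y - u x - (v y + 0 * d y)) / 2) * (- d y / 2)))) (at 0)"
    unfolding feq[abs_def] by (intro DERIV_add D1 D2 DERIV_cmult DERIV_const)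
  have val: "0 + (\<Sum>y\<in>UNIV. m y * (d y + exp (- (v y + 0 * d y)) * (- d y))) +
      2 * (\<Sum>x\<in>UNIV. \<Sum>y\<in>UNIV. sqrt (n x * m y) * (exp ((Phi x y - u x - (v y + 0 * d y)) / 2) * (- d y / 2)))
    = m y0 * (1 - exp (- v y0)) - (\<Sum>x\<in>UNIV. sqrt (n x * m y0) * exp ((Phi x y0 - u x - v y0) / 2))"
  proof -
    have a: "(\<Sum>y\<in>UNIV. m y * (d y + exp (- (v y + 0 * d y)) * (- d y))) = m y0 * (1 - exp (- v y0))"
      by (simp add: d_def if_distrib cong: if_cong)
    have b: "(\<Sum>x\<in>UNIV. \<Sum>y\<in>UNIV. sqrt (n x * m y) * (exp ((Phi x y - u x - (v y + 0 * d y)) / 2) * (- d y / 2)))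
        = (\<Sum>x\<in>UNIV. - (sqrt (n x * m y0) * exp ((Phi x y0 - u x - v y0) / 2)) / 2)"
    proof (intro sum.cong refl)
      fix x
      have "(\<Sum>y\<in>UNIV. sqrt (n x * m y) * (exp ((Phi x y - u x - (v y + 0 * d y)) / 2) * (- d y / 2)))
          = (\<Sum>y\<in>UNIV. (if y = y0 then 1 else 0) * (- (sqrt (n x * m y) * exp ((Phi x y - u x - v y) / 2)) / 2))"
        by (rule sum.cong) (auto simp: d_def)
      then show "(\<Sum>y\<in>UNIV. sqrt (n x * m y) * (exp ((Phi x y - u x - (v y + 0 * d y)) / 2) * (- d y / 2)))
          = - (sqrt (n x * m y0) * exp ((Phi x y0 - u x - v y0) / 2)) / 2"
        by (simp only: sum_delta_mult)
    qed
    also have "\<dots> = - (\<Sum>x\<in>UNIV. sqrt (n x * m y0) * exp ((Phi x y0 - u x - v y0) / 2)) / 2"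
      by (simp add: sum_divide_distrib sum_negf)
    finally show ?thesis using a by simp
  qed
  have "m y0 * (1 - exp (- v y0)) - (\<Sum>x\<in>UNIV. sqrt (n x * m y0) * exp ((Phi x y0 - u x - v y0) / 2)) = 0"
  proof (rule DERIV_local_min[OF D[unfolded val] zero_less_one], intro allI impI)
    fix y :: real
    show "f 0 \<le> f y" using min by (simp add: f_def)
  qed
  then show ?thesis by (simp add: algebra_simps)
qed

lemma sum_option_UNIV:
  fixes f :: "'a::finite option \<Rightarrow> real"
  shows "(\<Sum>z\<in>UNIV. f z) = f None + (\<Sum>y\<in>UNIV. f (Some y))"
proof -
  have "(\<Sum>z\<in>UNIV. f z) = (\<Sum>z\<in>insert None (range Some). f z)" by (simp add: UNIV_option_conv[symmetric])
  also have "\<dots> = f None + (\<Sum>z\<in>range Some. f z)" by (subst sum.insert) auto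
  also have "(\<Sum>z\<in>range Some. f z) = (\<Sum>y\<in>UNIV. f (Some y))" by (subst sum.reindex) auto
  finally show ?thesis .
qed

lemma avg_men_gumbel:
  fixes P :: "'x \<Rightarrow> ('y::finite option \<Rightarrow> real) measure"
  assumes "P x = iid_gumbel"
  shows "avg_util_men P U x = ln (1 + (\<Sum>y\<in>UNIV. exp (U x y)))"
  unfolding avg_util_men_def assms max_gumbel
  by (simp add: sum_option_UNIV Uext_def)

lemma avg_women_gumbel:
  fixes Q :: "'y \<Rightarrow> ('x::finite option \<Rightarrow> real) measure"
  assumes "Q y = iid_gumbel"
  shows "avg_util_women Q V y = ln (1 + (\<Sum>x\<in>UNIV. exp (V x y)))"
  unfolding avg_util_women_def assms max_gumbel
  by (simp add: sum_option_UNIV Vext_def)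

lemma G_gumbel:
  fixes P :: "'x::finite \<Rightarrow> ('y::finite option \<Rightarrow> real) measure"
  assumes "\<forall>x. P x = iid_gumbel"
  shows "G P U n = (\<Sum>x\<in>UNIV. n x * ln (1 + (\<Sum>y\<in>UNIV. exp (U x y))))"
  unfolding G_def using assms by (simp add: avg_men_gumbel)

lemma H_gumbel:
  fixes Q :: "'y::finite \<Rightarrow> ('x::finite option \<Rightarrow> real) measure"
  assumes "\<forall>y. Q y = iid_gumbel"
  shows "H Q V m = (\<Sum>y\<in>UNIV. m y * ln (1 + (\<Sum>x\<in>UNIV. exp (V x y))))"
  unfolding H_def using assms by (simp add: avg_women_gumbel)

lemma G_val:
  fixes P :: "'x::finite \<Rightarrow> ('y::finite option \<Rightarrow> real) measure"
  assumes "\<forall>x. P x = iid_gumbel"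
  shows "(\<Sum>x\<in>UNIV. \<Sum>y\<in>UNIV. mu x y * U x y) - G P U n = (\<Sum>x\<in>UNIV. cval (mu x) (n x) (U x))"
  unfolding G_gumbel[OF assms] cval_def by (simp add: sum_subtractf)

lemma H_val:
  fixes Q :: "'y::finite \<Rightarrow> ('x::finite option \<Rightarrow> real) measure"
  assumes "\<forall>y. Q y = iid_gumbel"
  shows "(\<Sum>x\<in>UNIV. \<Sum>y\<in>UNIV. mu x y * V x y) - H Q V m = (\<Sum>y\<in>UNIV. cval (\<lambda>x. mu x y) (m y) (\<lambda>x. V x y))"
proof -
  have "(\<Sum>x\<in>UNIV. \<Sum>y\<in>UNIV. mu x y * V x y) = (\<Sum>y\<in>UNIV. \<Sum>x\<in>UNIV. mu x y * V x y)"
    by (rule sum.swap)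
  then show ?thesis
    unfolding H_gumbel[OF assms] cval_def by (simp add: sum_subtractf)
qed

lemma sup_eq_lim:
  fixes f :: "'a \<Rightarrow> real"
  assumes le: "\<And>U. f U \<le> C" and lim: "((\<lambda>e. f (W e)) \<longlongrightarrow> C) (at_right (0::real))"
  shows "(SUP U. ereal (f U)) = ereal C"
proof (rule antisym)
  show "(SUP U. ereal (f U)) \<le> ereal C" by (rule SUP_least) (simp add: le)
  have l1: "((\<lambda>e. ereal (f (W e))) \<longlongrightarrow> ereal C) (at_right (0::real))"
    using lim by (rule tendsto_ereal)
  have l2: "((\<lambda>e. SUP U. ereal (f U)) \<longlongrightarrow> (SUP U. ereal (f U))) (at_right (0::real))"
    by (rule tendsto_const)
  show "ereal C \<le> (SUP U. ereal (f U))"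
    by (rule tendsto_le[OF _ l2 l1]) (auto intro!: always_eventually SUP_upper)
qed

lemma Gstar_feasible:
  fixes P :: "'x::finite \<Rightarrow> ('y::finite option \<Rightarrow> real) measure"
  assumes P: "\<forall>x. P x = iid_gumbel" and n: "\<forall>x. 0 < n x"
    and mu: "\<forall>x y. 0 \<le> mu x y" and mu0: "\<forall>x. 0 \<le> mu_x0 mu n x"
  shows "Gstar P mu n = ereal (\<Sum>x\<in>UNIV. cent (mu x) (n x))"
  unfolding Gstar_def G_val[OF P]
proof (rule sup_eq_lim)
  fix U :: "'x \<Rightarrow> 'y \<Rightarrow> real"
  show "(\<Sum>x\<in>UNIV. cval (mu x) (n x) (U x)) \<le> (\<Sum>x\<in>UNIV. cent (mu x) (n x))"
    by (intro sum_mono cval_le_cent) (use n mu mu0 in \<open>auto simp: mu_x0_def\<close>)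
next
  show "((\<lambda>e. \<Sum>x\<in>UNIV. cval (mu x) (n x) ((\<lambda>e x y. ln (mu x y + e) - ln (n x - sum (mu x) UNIV + e)) e x))
     \<longlongrightarrow> (\<Sum>x\<in>UNIV. cent (mu x) (n x))) (at_right 0)"
    by (intro tendsto_sum cval_approx) (use n mu mu0 in \<open>auto simp: mu_x0_def\<close>)
qed

lemma Hstar_feasible:
  fixes Q :: "'y::finite \<Rightarrow> ('x::finite option \<Rightarrow> real) measure"
  assumes Q: "\<forall>y. Q y = iid_gumbel" and m: "\<forall>y. 0 < m y"
    and mu: "\<forall>x y. 0 \<le> mu x y" and mu0: "\<forall>y. 0 \<le> mu_0y mu m y"
  shows "Hstar Q mu m = ereal (\<Sum>y\<in>UNIV. cent (\<lambda>x. mu x y) (m y))"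
  unfolding Hstar_def H_val[OF Q]
proof (rule sup_eq_lim)
  fix V :: "'x \<Rightarrow> 'y \<Rightarrow> real"
  show "(\<Sum>y\<in>UNIV. cval (\<lambda>x. mu x y) (m y) (\<lambda>x. V x y)) \<le> (\<Sum>y\<in>UNIV. cent (\<lambda>x. mu x y) (m y))"
    by (intro sum_mono cval_le_cent) (use m mu mu0 in \<open>auto simp: mu_0y_def\<close>)
next
  show "((\<lambda>e. \<Sum>y\<in>UNIV. cval (\<lambda>x. mu x y) (m y) (\<lambda>x. (\<lambda>e x y. ln (mu x y + e) - ln (m y - (\<Sum>x\<in>UNIV. mu x y) + e)) e x y))
     \<longlongrightarrow> (\<Sum>y\<in>UNIV. cent (\<lambda>x. mu x y) (m y))) (at_right 0)"
  proof (intro tendsto_sum)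
    fix y
    show "((\<lambda>e. cval (\<lambda>x. mu x y) (m y) (\<lambda>x. ln (mu x y + e) - ln (m y - (\<Sum>x\<in>UNIV. mu x y) + e)))
       \<longlongrightarrow> cent (\<lambda>x. mu x y) (m y)) (at_right 0)"
      using cval_approx[of "\<lambda>x. mu x y" "m y"] m mu mu0 by (simp add: mu_0y_def)
  qed
qed

lemma ereal_dual_aux1: "ereal a \<le> X \<Longrightarrow> ereal b \<le> Y \<Longrightarrow> s - a - b = t \<Longrightarrow> ereal s + (- X - Y) \<le> ereal t"
  by (cases X; cases Y) auto

lemma ereal_dual_aux2: "ereal s + (- X - Y) = ereal t \<Longrightarrow> ereal a \<le> X \<Longrightarrow> ereal b \<le> Y \<Longrightarrow> s - a - b = t \<Longrightarrow> X = ereal a"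
  by (cases X; cases Y) auto

lemma sqrt_exp: "sqrt (exp a) = exp (a / 2)"
proof -
  have "exp a = (exp (a / 2))^2" by (simp add: power2_eq_square exp_add[symmetric])
  then show ?thesis by simp
qed

lemma Gstar_ge:
  "ereal ((\<Sum>x\<in>UNIV. \<Sum>y\<in>UNIV. mu x y * U x y) - G P U n) \<le> Gstar P mu n"
  unfolding Gstar_def by (rule SUP_upper) simp

lemma Hstar_ge:
  "ereal ((\<Sum>x\<in>UNIV. \<Sum>y\<in>UNIV. mu x y * V x y) - H Q V m) \<le> Hstar Q mu m"
  unfolding Hstar_def by (rule SUP_upper) simp

lemma dual_identity:
  fixes Phi :: "'x::finite \<Rightarrow> 'y::finite \<Rightarrow> real"
  shows "(\<Sum>x\<in>UNIV. \<Sum>y\<in>UNIV. mu x y * Phi x y)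
     - ((\<Sum>x\<in>UNIV. \<Sum>y\<in>UNIV. mu x y * U x y) - GG)
     - ((\<Sum>x\<in>UNIV. \<Sum>y\<in>UNIV. mu x y * (Phi x y - U x y)) - HH) = GG + HH"
proof -
  have "(\<Sum>x\<in>UNIV. \<Sum>y\<in>UNIV. mu x y * (Phi x y - U x y))
      = (\<Sum>x\<in>UNIV. \<Sum>y\<in>UNIV. mu x y * Phi x y) - (\<Sum>x\<in>UNIV. \<Sum>y\<in>UNIV. mu x y * U x y)"
    by (simp add: right_diff_distrib sum_subtractf)
  then show ?thesis by simp
qed

lemma weak_dual:
  fixes P :: "'x::finite \<Rightarrow> ('y::finite option \<Rightarrow> real) measure"
    and Q :: "'y \<Rightarrow> ('x option \<Rightarrow> real) measure"
  shows "welfare_obj P Q Phi mu n m \<le> ereal (G P U n + H Q (\<lambda>x y. Phi x y - U x y) m)"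
  unfolding welfare_obj_def gen_entropy_def
  by (rule ereal_dual_aux1[OF Gstar_ge Hstar_ge dual_identity])

lemma dual_tight:
  fixes P :: "'x::finite \<Rightarrow> ('y::finite option \<Rightarrow> real) measure"
    and Q :: "'y \<Rightarrow> ('x option \<Rightarrow> real) measure"
  assumes "welfare_obj P Q Phi mu n m = ereal (G P U n + H Q (\<lambda>x y. Phi x y - U x y) m)"
  shows "Gstar P mu n = ereal ((\<Sum>x\<in>UNIV. \<Sum>y\<in>UNIV. mu x y * U x y) - G P U n)"
  using assms unfolding welfare_obj_def gen_entropy_def
  by (rule ereal_dual_aux2[OF _ Gstar_ge Hstar_ge dual_identity])

lemma min_case:
  fixes P :: "'x::finite \<Rightarrow> ('y::finite option \<Rightarrow> real) measure"
    and Q :: "'y \<Rightarrow> ('x option \<Rightarrow> real) measure"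
    and n :: "'x \<Rightarrow> real" and m :: "'y \<Rightarrow> real"
    and Phi :: "'x \<Rightarrow> 'y \<Rightarrow> real"
  assumes n_pos: "\<forall>x. 0 < n x" and m_pos: "\<forall>y. 0 < m y"
    and P_gumbel: "\<forall>x. P x = iid_gumbel"
    and Q_gumbel: "\<forall>y. Q y = iid_gumbel"
    and min: "\<forall>u' v'. Ffun Phi n m u v \<le> Ffun Phi n m u' v'"
  shows "let mu = (\<lambda>x y. sqrt (n x * m y) * exp ((Phi x y - u x - v y) / 2)) in
             social_welfare P Q Phi n m = ereal (Ffun Phi n m u v)
           \<and> (\<forall>mu'. is_equilibrium_matching P Q Phi n m mu' \<longleftrightarrow> mu' = mu)
           \<and> (\<forall>x. mu_x0 mu n x = n x * exp (- u x))
           \<and> (\<forall>y. mu_0y mu m y = m y * exp (- v y))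
           \<and> (\<forall>x y. mu x y = sqrt (mu_x0 mu n x * mu_0y mu m y) * exp (Phi x y / 2))
           \<and> (\<forall>x. u x = - ln (mu_x0 mu n x / n x))
           \<and> (\<forall>y. v y = - ln (mu_0y mu m y / m y))
           \<and> (\<exists>U. ereal ((\<Sum>x\<in>UNIV. \<Sum>y\<in>UNIV. mu x y * U x y) - G P U n) = Gstar P mu n
                 \<and> ereal ((\<Sum>x\<in>UNIV. \<Sum>y\<in>UNIV. mu x y * (Phi x y - U x y))
                          - H Q (\<lambda>x y. Phi x y - U x y) m) = Hstar Q mu m
                 \<and> (\<forall>x. u x = avg_util_men P U x)
                 \<and> (\<forall>y. v y = avg_util_women Q (\<lambda>x y. Phi x y - U x y) y))"
proof -
  define mu where "mu = (\<lambda>x y. sqrt (n x * m y) * exp ((Phi x y - u x - v y) / 2))"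
  have npos: "0 < n x" for x using n_pos by simp
  have mpos: "0 < m y" for y using m_pos by simp
  have mupos: "0 < mu x y" for x y
    unfolding mu_def using npos[of x] mpos[of y] by simp
  have x0: "mu_x0 mu n x = n x * exp (- u x)" for x
    unfolding mu_x0_def mu_def using Ffun_foc_u[OF min, of x] by simp
  have y0: "mu_0y mu m y = m y * exp (- v y)" for y
    unfolding mu_0y_def mu_def using Ffun_foc_v[OF min, of y] by simp
  have x0pos: "0 < mu_x0 mu n x" for x using x0 npos by simp
  have y0pos: "0 < mu_0y mu m y" for y using y0 mpos by simp
  have muform: "mu x y = sqrt (mu_x0 mu n x * mu_0y mu m y) * exp (Phi x y / 2)" for x y
  proof -
    have "sqrt (mu_x0 mu n x * mu_0y mu m y) * exp (Phi x y / 2)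
        = sqrt (n x * m y) * (exp (- u x / 2) * exp (- v y / 2) * exp (Phi x y / 2))"
      by (simp add: x0 y0 real_sqrt_mult sqrt_exp)
    also have "exp (- u x / 2) * exp (- v y / 2) * exp (Phi x y / 2) = exp ((Phi x y - u x - v y) / 2)"
      by (simp add: exp_add[symmetric] add_divide_distrib[symmetric] diff_divide_distrib)
    finally show ?thesis by (simp add: mu_def)
  qed
  have uform: "u x = - ln (mu_x0 mu n x / n x)" for x
    using npos[of x] by (simp add: x0)
  have vform: "v y = - ln (mu_0y mu m y / m y)" for y
    using mpos[of y] by (simp add: y0)
  have sumx: "(\<Sum>y\<in>UNIV. mu x y) = n x - mu_x0 mu n x" for x by (simp add: mu_x0_def)
  have sumy: "(\<Sum>x\<in>UNIV. mu x y) = m y - mu_0y mu m y" for y by (simp add: mu_0y_def)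
  define U where "U x y = ln (mu x y) - ln (mu_x0 mu n x)" for x y
  have Vform: "Phi x y - U x y = ln (mu x y) - ln (mu_0y mu m y)" for x y
  proof -
    have "ln (mu x y) = ln (mu_x0 mu n x) / 2 + ln (mu_0y mu m y) / 2 + Phi x y / 2"
      using x0pos[of x] y0pos[of y] by (subst muform) (simp add: ln_mult ln_sqrt)
    then show ?thesis by (simp add: U_def)
  qed
  have expU: "exp (U x y) = mu x y / mu_x0 mu n x" for x y
    using mupos[of x y] x0pos[of x] by (simp add: U_def exp_diff)
  have expV: "exp (Phi x y - U x y) = mu x y / mu_0y mu m y" for x y
    using mupos[of x y] y0pos[of y] by (simp add: Vform exp_diff)
  have avgU: "avg_util_men P U x = u x" for x
  proof -
    have "1 + (\<Sum>y\<in>UNIV. exp (U x y)) = n x / mu_x0 mu n x"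
      using x0pos[of x] by (simp add: expU sum_divide_distrib[symmetric] sumx field_simps)
    then have "avg_util_men P U x = ln (n x / mu_x0 mu n x)"
      using avg_men_gumbel[of P x U] P_gumbel by simp
    also have "\<dots> = u x" using uform[of x] npos[of x] x0pos[of x] by (simp add: ln_div)
    finally show ?thesis .
  qed
  have avgV: "avg_util_women Q (\<lambda>x y. Phi x y - U x y) y = v y" for y
  proof -
    have "1 + (\<Sum>x\<in>UNIV. exp (Phi x y - U x y)) = m y / mu_0y mu m y"
      using y0pos[of y] by (simp add: expV sum_divide_distrib[symmetric] sumy field_simps)
    then have "avg_util_women Q (\<lambda>x y. Phi x y - U x y) y = ln (m y / mu_0y mu m y)"
      using avg_women_gumbel[of Q y "\<lambda>x y. Phi x y - U x y"] Q_gumbel by simp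
    also have "\<dots> = v y" using vform[of y] mpos[of y] y0pos[of y] by (simp add: ln_div)
    finally show ?thesis .
  qed
  have Gstar_mu: "Gstar P mu n = ereal (\<Sum>x\<in>UNIV. cent (mu x) (n x))"
    by (rule Gstar_feasible[OF P_gumbel n_pos]) (use mupos x0pos in \<open>auto intro: less_imp_le\<close>)
  have Hstar_mu: "Hstar Q mu m = ereal (\<Sum>y\<in>UNIV. cent (\<lambda>x. mu x y) (m y))"
    by (rule Hstar_feasible[OF Q_gumbel m_pos]) (use mupos y0pos in \<open>auto intro: less_imp_le\<close>)
  have Geq: "ereal ((\<Sum>x\<in>UNIV. \<Sum>y\<in>UNIV. mu x y * U x y) - G P U n) = Gstar P mu n"
  proof -
    have "cval (mu x) (n x) (U x) = cent (mu x) (n x)" for x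
      using cval_attain[of "mu x" "n x"] mupos npos[of x] x0pos[of x]
      by (simp add: U_def[abs_def] mu_x0_def)
    then show ?thesis unfolding G_val[OF P_gumbel] Gstar_mu by simp
  qed
  have Heq: "ereal ((\<Sum>x\<in>UNIV. \<Sum>y\<in>UNIV. mu x y * (Phi x y - U x y)) - H Q (\<lambda>x y. Phi x y - U x y) m) = Hstar Q mu m"
  proof -
    have "cval (\<lambda>x. mu x y) (m y) (\<lambda>x. Phi x y - U x y) = cent (\<lambda>x. mu x y) (m y)" for y
      using cval_attain[of "\<lambda>x. mu x y" "m y"] mupos mpos[of y] y0pos[of y]
      by (simp add: Vform mu_0y_def)
    then show ?thesis unfolding H_val[OF Q_gumbel] Hstar_mu by simp
  qed
  have GU: "G P U n = (\<Sum>x\<in>UNIV. n x * u x)" unfolding G_def by (simp add: avgU)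
  have HV: "H Q (\<lambda>x y. Phi x y - U x y) m = (\<Sum>y\<in>UNIV. m y * v y)" unfolding H_def by (simp add: avgV)
  have Fval: "Ffun Phi n m u v = (\<Sum>x\<in>UNIV. n x * u x) + (\<Sum>y\<in>UNIV. m y * v y)"
  proof -
    have a: "(\<Sum>x\<in>UNIV. n x * (u x + exp (- u x) - 1)) = (\<Sum>x\<in>UNIV. n x * u x) - (\<Sum>x\<in>UNIV. \<Sum>y\<in>UNIV. mu x y)"
    proof -
      have "n x * (u x + exp (- u x) - 1) = n x * u x - (\<Sum>y\<in>UNIV. mu x y)" for x
        using x0[of x] sumx[of x] by (simp add: algebra_simps)
      then show ?thesis by (simp add: sum_subtractf)
    qed
    have b: "(\<Sum>y\<in>UNIV. m y * (v y + exp (- v y) - 1)) = (\<Sum>y\<in>UNIV. m y * v y) - (\<Sum>y\<in>UNIV. \<Sum>x\<in>UNIV. mu x y)"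
    proof -
      have "m y * (v y + exp (- v y) - 1) = m y * v y - (\<Sum>x\<in>UNIV. mu x y)" for y
        using y0[of y] sumy[of y] by (simp add: algebra_simps)
      then show ?thesis by (simp add: sum_subtractf)
    qed
    have c: "(\<Sum>y\<in>UNIV. \<Sum>x\<in>UNIV. mu x y) = (\<Sum>x\<in>UNIV. \<Sum>y\<in>UNIV. mu x y)" by (rule sum.swap)
    have d: "(\<Sum>x\<in>UNIV. \<Sum>y\<in>UNIV. sqrt (n x * m y) * exp ((Phi x y - u x - v y) / 2)) = (\<Sum>x\<in>UNIV. \<Sum>y\<in>UNIV. mu x y)"
      by (simp add: mu_def)
    show ?thesis unfolding Ffun_def a b c d by simp
  qed
  define Wv where "Wv = G P U n + H Q (\<lambda>x y. Phi x y - U x y) m"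
  have Wv: "Wv = Ffun Phi n m u v" by (simp add: Wv_def GU HV Fval)
  have wmu: "welfare_obj P Q Phi mu n m = ereal Wv"
  proof -
    have "welfare_obj P Q Phi mu n m = ereal ((\<Sum>x\<in>UNIV. \<Sum>y\<in>UNIV. mu x y * Phi x y)
      - ((\<Sum>x\<in>UNIV. \<Sum>y\<in>UNIV. mu x y * U x y) - G P U n)
      - ((\<Sum>x\<in>UNIV. \<Sum>y\<in>UNIV. mu x y * (Phi x y - U x y)) - H Q (\<lambda>x y. Phi x y - U x y) m))"
      unfolding welfare_obj_def gen_entropy_def Geq[symmetric] Heq[symmetric] by simp
    then show ?thesis unfolding dual_identity Wv_def .
  qed
  have SW: "social_welfare P Q Phi n m = ereal Wv"
  proof (rule antisym)
    show "social_welfare P Q Phi n m \<le> ereal Wv"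
      unfolding social_welfare_def Wv_def by (rule SUP_least) (rule weak_dual)
    show "ereal Wv \<le> social_welfare P Q Phi n m"
      unfolding social_welfare_def wmu[symmetric] by (rule SUP_upper) simp
  qed
  have equil: "is_equilibrium_matching P Q Phi n m mu' \<longleftrightarrow> mu' = mu" for mu'
  proof
    assume "mu' = mu" then show "is_equilibrium_matching P Q Phi n m mu'"
      unfolding is_equilibrium_matching_def SW using wmu by simp
  next
    assume eq: "is_equilibrium_matching P Q Phi n m mu'"
    then have "welfare_obj P Q Phi mu' n m = ereal (G P U n + H Q (\<lambda>x y. Phi x y - U x y) m)"
      unfolding is_equilibrium_matching_def SW Wv_def .
    from dual_tight[OF this]
    have tight: "Gstar P mu' n = ereal (\<Sum>x\<in>UNIV. cval (mu' x) (n x) (U x))"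
      unfolding G_val[OF P_gumbel] .
    have le: "(\<Sum>x\<in>UNIV. cval (mu' x) (n x) (U' x)) \<le> (\<Sum>x\<in>UNIV. cval (mu' x) (n x) (U x))" for U'
    proof -
      have "ereal (\<Sum>x\<in>UNIV. cval (mu' x) (n x) (U' x)) \<le> Gstar P mu' n"
        using Gstar_ge[of mu' U' P n] unfolding G_val[OF P_gumbel] .
      then show ?thesis unfolding tight by simp
    qed
    show "mu' = mu"
    proof (intro ext)
      fix x0 y
      have loc: "cval (mu' x0) (n x0) w \<le> cval (mu' x0) (n x0) (U x0)" for w
      proof -
        have s1: "(\<Sum>x\<in>UNIV. cval (mu' x) (n x) ((U(x0 := w)) x)) = cval (mu' x0) (n x0) w + (\<Sum>x\<in>UNIV - {x0}. cval (mu' x) (n x) (U x))"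
          by (subst sum.remove[of UNIV x0]) (auto intro!: sum.cong)
        have s2: "(\<Sum>x\<in>UNIV. cval (mu' x) (n x) (U x)) = cval (mu' x0) (n x0) (U x0) + (\<Sum>x\<in>UNIV - {x0}. cval (mu' x) (n x) (U x))"
          by (subst sum.remove[of UNIV x0]) auto
        show ?thesis using le[of "U(x0 := w)"] unfolding s1 s2 by simp
      qed
      have "mu' x0 y = n x0 * exp (U x0 y) / (1 + (\<Sum>i\<in>UNIV. exp (U x0 i)))"
        by (rule cval_foc) (rule loc)
      also have "1 + (\<Sum>i\<in>UNIV. exp (U x0 i)) = n x0 / mu_x0 mu n x0"
        using x0pos[of x0] by (simp add: expU sum_divide_distrib[symmetric] sumx field_simps)
      also have "n x0 * exp (U x0 y) / (n x0 / mu_x0 mu n x0) = mu x0 y"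
        using npos[of x0] x0pos[of x0] by (simp add: expU)
      finally show "mu' x0 y = mu x0 y" .
    qed
  qed
  have ex: "\<exists>U. ereal ((\<Sum>x\<in>UNIV. \<Sum>y\<in>UNIV. mu x y * U x y) - G P U n) = Gstar P mu n
                 \<and> ereal ((\<Sum>x\<in>UNIV. \<Sum>y\<in>UNIV. mu x y * (Phi x y - U x y))
                          - H Q (\<lambda>x y. Phi x y - U x y) m) = Hstar Q mu m
                 \<and> (\<forall>x. u x = avg_util_men P U x)
                 \<and> (\<forall>y. v y = avg_util_women Q (\<lambda>x y. Phi x y - U x y) y)"
    using Geq Heq avgU avgV by (intro exI[of _ U]) simp
  show ?thesis
    unfolding Let_def mu_def[symmetric]
    using SW Wv equil x0 y0 muform uform vform ex
    by simp
qed

theorem mainTheorem10: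
  fixes P :: "'x::finite \<Rightarrow> ('y::finite option \<Rightarrow> real) measure"
    and Q :: "'y \<Rightarrow> ('x option \<Rightarrow> real) measure"
    and n :: "'x \<Rightarrow> real" and m :: "'y \<Rightarrow> real"
    and Phi :: "'x \<Rightarrow> 'y \<Rightarrow> real"
  assumes n_pos: "\<forall>x. 0 < n x" and m_pos: "\<forall>y. 0 < m y"
    and P_gumbel: "\<forall>x. P x = iid_gumbel"
    and Q_gumbel: "\<forall>y. Q y = iid_gumbel"
  shows
    "(\<forall>mu. feasible_matching mu n m \<longrightarrow>
        gen_entropy P Q mu n m =
          ereal (- (\<Sum>x\<in>UNIV. (\<Sum>y\<in>UNIV. mu x y * ln (mu x y / n x))
                              + mu_x0 mu n x * ln (mu_x0 mu n x / n x))
                 - (\<Sum>y\<in>UNIV. (\<Sum>x\<in>UNIV. mu x y * ln (mu x y / m y))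
                              + mu_0y mu m y * ln (mu_0y mu m y / m y))))
     \<and> (\<forall>u v u' v' t. (u, v) \<noteq> (u', v') \<and> 0 < t \<and> t < 1 \<longrightarrow>
          Ffun Phi n m (\<lambda>x. t * u x + (1 - t) * u' x) (\<lambda>y. t * v y + (1 - t) * v' y)
            < t * Ffun Phi n m u v + (1 - t) * Ffun Phi n m u' v')
     \<and> (\<exists>u v. \<forall>u' v'. Ffun Phi n m u v \<le> Ffun Phi n m u' v')
     \<and> (\<forall>u v. (\<forall>u' v'. Ffun Phi n m u v \<le> Ffun Phi n m u' v') \<longrightarrow>
          (let mu = (\<lambda>x y. sqrt (n x * m y) * exp ((Phi x y - u x - v y) / 2)) in
             social_welfare P Q Phi n m = ereal (Ffun Phi n m u v)
           \<and> (\<forall>mu'. is_equilibrium_matching P Q Phi n m mu' \<longleftrightarrow> mu' = mu)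
           \<and> (\<forall>x. mu_x0 mu n x = n x * exp (- u x))
           \<and> (\<forall>y. mu_0y mu m y = m y * exp (- v y))
           \<and> (\<forall>x y. mu x y = sqrt (mu_x0 mu n x * mu_0y mu m y) * exp (Phi x y / 2))
           \<and> (\<forall>x. u x = - ln (mu_x0 mu n x / n x))
           \<and> (\<forall>y. v y = - ln (mu_0y mu m y / m y))
           \<and> (\<exists>U. ereal ((\<Sum>x\<in>UNIV. \<Sum>y\<in>UNIV. mu x y * U x y) - G P U n) = Gstar P mu n
                 \<and> ereal ((\<Sum>x\<in>UNIV. \<Sum>y\<in>UNIV. mu x y * (Phi x y - U x y))
                          - H Q (\<lambda>x y. Phi x y - U x y) m) = Hstar Q mu m
                 \<and> (\<forall>x. u x = avg_util_men P U x)
                 \<and> (\<forall>y. v y = avg_util_women Q (\<lambda>x y. Phi x y - U x y) y))))"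
proof (intro conjI)
  show "\<forall>mu. feasible_matching mu n m \<longrightarrow>
        gen_entropy P Q mu n m =
          ereal (- (\<Sum>x\<in>UNIV. (\<Sum>y\<in>UNIV. mu x y * ln (mu x y / n x))
                              + mu_x0 mu n x * ln (mu_x0 mu n x / n x))
                 - (\<Sum>y\<in>UNIV. (\<Sum>x\<in>UNIV. mu x y * ln (mu x y / m y))
                              + mu_0y mu m y * ln (mu_0y mu m y / m y)))"
  proof (intro allI impI)
    fix mu :: "'x \<Rightarrow> 'y \<Rightarrow> real"
    assume f: "feasible_matching mu n m"
    have mu: "\<forall>x y. 0 \<le> mu x y" and x0: "\<forall>x. 0 \<le> mu_x0 mu n x" and y0: "\<forall>y. 0 \<le> mu_0y mu m y"
      using f by (auto simp: feasible_matching_def)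
    have cx: "cent (mu x) (n x) = (\<Sum>y\<in>UNIV. mu x y * ln (mu x y / n x)) + mu_x0 mu n x * ln (mu_x0 mu n x / n x)" for x
      by (simp add: cent_def mu_x0_def)
    have cy: "cent (\<lambda>x. mu x y) (m y) = (\<Sum>x\<in>UNIV. mu x y * ln (mu x y / m y)) + mu_0y mu m y * ln (mu_0y mu m y / m y)" for y
      by (simp add: cent_def mu_0y_def)
    show "gen_entropy P Q mu n m =
          ereal (- (\<Sum>x\<in>UNIV. (\<Sum>y\<in>UNIV. mu x y * ln (mu x y / n x))
                              + mu_x0 mu n x * ln (mu_x0 mu n x / n x))
                 - (\<Sum>y\<in>UNIV. (\<Sum>x\<in>UNIV. mu x y * ln (mu x y / m y))
                              + mu_0y mu m y * ln (mu_0y mu m y / m y)))"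
      unfolding gen_entropy_def Gstar_feasible[OF P_gumbel n_pos mu x0] Hstar_feasible[OF Q_gumbel m_pos mu y0]
      by (simp add: cx cy)
  qed
next
  show "\<forall>u v u' v' t. (u, v) \<noteq> (u', v') \<and> 0 < t \<and> t < 1 \<longrightarrow>
          Ffun Phi n m (\<lambda>x. t * u x + (1 - t) * u' x) (\<lambda>y. t * v y + (1 - t) * v' y)
            < t * Ffun Phi n m u v + (1 - t) * Ffun Phi n m u' v'"
    using Ffun_strict_conv[OF n_pos m_pos] by blast
next
  show "\<exists>u v. \<forall>u' v'. Ffun Phi n m u v \<le> Ffun Phi n m u' v'"
    by (rule Ffun_exists_min[OF n_pos m_pos])
next
  show "\<forall>u v. (\<forall>u' v'. Ffun Phi n m u v \<le> Ffun Phi n m u' v') \<longrightarrow>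
          (let mu = (\<lambda>x y. sqrt (n x * m y) * exp ((Phi x y - u x - v y) / 2)) in
             social_welfare P Q Phi n m = ereal (Ffun Phi n m u v)
           \<and> (\<forall>mu'. is_equilibrium_matching P Q Phi n m mu' \<longleftrightarrow> mu' = mu)
           \<and> (\<forall>x. mu_x0 mu n x = n x * exp (- u x))
           \<and> (\<forall>y. mu_0y mu m y = m y * exp (- v y))
           \<and> (\<forall>x y. mu x y = sqrt (mu_x0 mu n x * mu_0y mu m y) * exp (Phi x y / 2))
           \<and> (\<forall>x. u x = - ln (mu_x0 mu n x / n x))
           \<and> (\<forall>y. v y = - ln (mu_0y mu m y / m y))
           \<and> (\<exists>U. ereal ((\<Sum>x\<in>UNIV. \<Sum>y\<in>UNIV. mu x y * U x y) - G P U n) = Gstar P mu n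
                 \<and> ereal ((\<Sum>x\<in>UNIV. \<Sum>y\<in>UNIV. mu x y * (Phi x y - U x y))
                          - H Q (\<lambda>x y. Phi x y - U x y) m) = Hstar Q mu m
                 \<and> (\<forall>x. u x = avg_util_men P U x)
                 \<and> (\<forall>y. v y = avg_util_women Q (\<lambda>x y. Phi x y - U x y) y)))"
    using min_case[OF n_pos m_pos P_gumbel Q_gumbel] by blast
qed

end
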